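(* Under Assumptions 1–2, assume $r_\ell<\min\{m_\ell,n_\ell\}$ for all $\ell$. If the hyperparameters satisfy $0<\beta_1\le1$, $\tau\ge\frac{64}{3\beta_1\underline\delta}$, and $0<\eta\le\min\Big\{\frac1{4L},\sqrt{\frac{3\underline\delta\beta_1^2}{80L^2}},\sqrt{\frac{3\underline\delta}{80\tau^2L^2}},\sqrt{\frac{3\beta_1}{16\tau L^2}}\Big\}$, then GaLore using deterministic gradients and MSGD with momentum projection satisfies, for every integer $K\ge1$, $\frac1{K\tau}\sum_{t=0}^{K\tau-1}\|\nabla f(x^{(t)})\|_2^2\le\frac{16\Delta}{\underline\delta\eta K\tau}.$
   Context: Parameters $x=(\mathrm{vec}(X_1)^\top,\dots,\mathrm{vec}(X_{N_L})^\top)^\top\in\mathbb{R}^d$, $X_\ell\in\mathbb{R}^{m_\ell\times n_\ell}$; $\nabla_\ell$ is the gradient w.r.t. $X_\ell$. Assumption 1: $\inf f>-\infty$. Assumption 2: $\nabla f$ is $L$-Lipschitz in $\|\cdot\|_2$. $\Delta=f(x^{(0)})-\inf f$, $\delta_\ell=r_\ell/\min\{m_\ell,n_\ell\}$, $\underline\delta=\min_\ell\delta_\ell$. Algorithm (deterministic GaLore with MSGD and momentum projection): $M_\ell^{(-1)}=0$. For $t\ge0$ and each $\ell$: $G_\ell^{(t)}=\nabla_\ell f(x^{(t)})$. If $t\equiv0\pmod\tau$, take an SVD $G_\ell^{(t)}=U\Sigma V^\top$ (singular values nonincreasing), $P_\ell^{(t)}=U[:,:r_\ell]$, $Q_\ell^{(t)}=V[:,:r_\ell]$;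 otherwise $P_\ell^{(t)}=P_\ell^{(t-1)}$, $Q_\ell^{(t)}=Q_\ell^{(t-1)}$. If $m_\ell\le n_\ell$: $M_\ell^{(t)}=(1-\beta_1)(P_\ell^{(t)})^\top P_\ell^{(t-1)}M_\ell^{(t-1)}+\beta_1(P_\ell^{(t)})^\top G_\ell^{(t)}$, $X_\ell^{(t+1)}=X_\ell^{(t)}-\eta P_\ell^{(t)}M_\ell^{(t)}$. If $m_\ell>n_\ell$: $M_\ell^{(t)}=(1-\beta_1)M_\ell^{(t-1)}(Q_\ell^{(t-1)})^\top Q_\ell^{(t)}+\beta_1G_\ell^{(t)}Q_\ell^{(t)}$, $X_\ell^{(t+1)}=X_\ell^{(t)}-\eta M_\ell^{(t)}(Q_\ell^{(t)})^\top$. *)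

theory Defs
  imports "HOL-Analysis.Analysis" "Jordan_Normal_Form.Matrix"
begin

definition is_svd :: "real mat \<Rightarrow> real mat \<Rightarrow> real mat \<Rightarrow> real mat \<Rightarrow> bool" where
  "is_svd G U S V \<longleftrightarrow>
     (let m = dim_row G; n = dim_col G in
        U \<in> carrier_mat m m \<and> V \<in> carrier_mat n n \<and> S \<in> carrier_mat m n \<and>
        transpose_mat U * U = 1\<^sub>m m \<and> transpose_mat V * V = 1\<^sub>m n \<and>
        (\<forall>i<m. \<forall>j<n. i \<noteq> j \<longrightarrow> S $$ (i,j) = 0) \<and>
        (\<forall>i<min m n. 0 \<le> S $$ (i,i)) \<and>
        (\<forall>i j. i \<le> j \<longrightarrow> j < min m n \<longrightarrow> S $$ (j,j) \<le> S $$ (i,i)) \<and>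
        G = U * S * transpose_mat V)"

definition first_cols :: "nat \<Rightarrow> real mat \<Rightarrow> real mat" where
  "first_cols r U = mat (dim_row U) r (\<lambda>(i,j). U $$ (i,j))"

text \<open>Block X_l of a parameter vector x, given the index map of the stacking.\<close>
definition block :: "(nat \<Rightarrow> nat \<Rightarrow> nat \<Rightarrow> 'd) \<Rightarrow> nat \<Rightarrow> nat \<Rightarrow> nat \<Rightarrow> real^'d \<Rightarrow> real mat" where
  "block ix m n l x = mat m n (\<lambda>(i,j). x $ ix l i j)"

end

theory Submission
  imports Defs
begin


lemma descent_lemma:
  fixes f :: "'a::real_inner \<Rightarrow> real" and grad :: "'a \<Rightarrow> 'a"
  assumes grad: "\<And>y. (f has_derivative (\<lambda>h. inner (grad y) h)) (at y)"
    and lip: "\<And>y z. norm (grad y - grad z) \<le> L * norm (y - z)"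
    and L: "0 \<le> L"
  shows "f y \<le> f x + inner (grad x) (y - x) + L * (norm (y - x))\<^sup>2"
proof -
  define \<phi> where "\<phi> s = f (x + s *\<^sub>R (y - x))" for s :: real
  have d: "(\<phi> has_real_derivative inner (grad (x + s *\<^sub>R (y - x))) (y - x)) (at s)" for s
  proof -
    have l: "((\<lambda>s. x + s *\<^sub>R (y - x)) has_derivative (\<lambda>h. h *\<^sub>R (y - x))) (at s)"
      by (auto intro!: derivative_eq_intros)
    have "((\<lambda>s. f (x + s *\<^sub>R (y - x))) has_derivative
        (\<lambda>h. inner (grad (x + s *\<^sub>R (y - x))) (h *\<^sub>R (y - x)))) (at s)"
      using has_derivative_compose[OF l grad] by (simp add: o_def)
    moreover have "(\<lambda>h::real. h * c) = (\<lambda>h. c * h)" for c by (auto simp: mult.commute)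
    ultimately show ?thesis unfolding \<phi>_def has_field_derivative_def
      by simp
  qed
  obtain z where z: "0 < z" "z < 1"
    and eq: "\<phi> 1 - \<phi> 0 = (1 - 0) * inner (grad (x + z *\<^sub>R (y - x))) (y - x)"
    using MVT2[of 0 1 \<phi> "\<lambda>s. inner (grad (x + s *\<^sub>R (y - x))) (y - x)"] d by auto
  have "inner (grad (x + z *\<^sub>R (y - x))) (y - x) - inner (grad x) (y - x)
      = inner (grad (x + z *\<^sub>R (y - x)) - grad x) (y - x)" by (simp add: inner_diff_left)
  also have "\<dots> \<le> norm (grad (x + z *\<^sub>R (y - x)) - grad x) * norm (y - x)"
    by (rule norm_cauchy_schwarz)
  also have "\<dots> \<le> (L * norm (z *\<^sub>R (y - x))) * norm (y - x)"
    using lip[of "x + z *\<^sub>R (y - x)" x] by (intro mult_right_mono) auto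
  also have "\<dots> \<le> L * (norm (y - x))\<^sup>2"
  proof -
    have "z * (norm (y - x))\<^sup>2 \<le> (norm (y - x))\<^sup>2" using z by (simp add: mult_left_le_one_le)
    then have "L * (z * (norm (y - x))\<^sup>2) \<le> L * (norm (y - x))\<^sup>2" using L by (rule mult_left_mono)
    moreover have "norm (z *\<^sub>R (y - x)) = z * norm (y - x)" using z by simp
    ultimately show ?thesis by (simp only: power2_eq_square mult_ac)
  qed
  finally show ?thesis using eq unfolding \<phi>_def by simp
qed

lemma geo_sum:
  fixes e b :: "nat \<Rightarrow> real"
  assumes e0: "e 0 \<le> c0" and enn: "\<And>t. 0 \<le> e t" and bnn: "\<And>t. 0 \<le> b t"
    and rec: "\<And>t. e (Suc t) \<le> (1 - \<beta>) * e t + b t" and \<beta>: "0 < \<beta>" "\<beta> \<le> 1"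
  shows "\<beta> * (\<Sum>t<T. e t) \<le> c0 + (\<Sum>t<T. b t)"
proof -
  have key: "\<beta> * (\<Sum>t<Suc T. e t) + (1 - \<beta>) * e T \<le> c0 + (\<Sum>t<T. b t)" for T
  proof (induction T)
    case 0 then show ?case using e0 by (simp add: algebra_simps)
  next
    case (Suc T)
    have "\<beta> * (\<Sum>t<Suc (Suc T). e t) + (1 - \<beta>) * e (Suc T)
        = \<beta> * (\<Sum>t<Suc T. e t) + e (Suc T)" by (simp add: algebra_simps)
    also have "\<dots> \<le> \<beta> * (\<Sum>t<Suc T. e t) + (1 - \<beta>) * e T + b T" using rec[of T] by simp
    also have "\<dots> \<le> c0 + (\<Sum>t<Suc T. b t)" using Suc by simp
    finally show ?case .
  qed
  show ?thesis
  proof (cases T)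
    case 0 then show ?thesis using e0 enn[of 0] by simp
  next
    case (Suc T')
    have "\<beta> * (\<Sum>t<T. e t) \<le> c0 + (\<Sum>t<T'. b t)"
      using key[of T'] enn[of T'] \<beta> Suc by (smt (verit) mult_nonneg_nonneg)
    also have "\<dots> \<le> c0 + (\<Sum>t<T. b t)" using Suc bnn by simp
    finally show ?thesis .
  qed
qed



lemma sum_sq_le:
  fixes a :: "nat \<Rightarrow> real"
  shows "(\<Sum>u<j. a u)\<^sup>2 \<le> real j * (\<Sum>u<j. (a u)\<^sup>2)"
proof (induction j)
  case 0 then show ?case by simp
next
  case (Suc j)
  have "2 * (\<Sum>u<j. a u) * a j = (\<Sum>u<j. 2 * a u * a j)" by (simp add: sum_distrib_right sum_distrib_left mult.assoc)
  also have "\<dots> \<le> (\<Sum>u<j. (a u)\<^sup>2 + (a j)\<^sup>2)"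
    by (intro sum_mono) (rule sum_squares_bound)
  also have "\<dots> = (\<Sum>u<j. (a u)\<^sup>2) + real j * (a j)\<^sup>2" by (simp add: sum.distrib)
  finally have c: "2 * (\<Sum>u<j. a u) * a j \<le> (\<Sum>u<j. (a u)\<^sup>2) + real j * (a j)\<^sup>2" .
  have "(\<Sum>u<Suc j. a u)\<^sup>2 = (\<Sum>u<j. a u)\<^sup>2 + 2 * (\<Sum>u<j. a u) * a j + (a j)\<^sup>2"
    by (simp add: power2_sum)
  also have "\<dots> \<le> real (Suc j) * (\<Sum>u<Suc j. (a u)\<^sup>2)"
    using Suc.IH c by (simp add: algebra_simps)
  finally show ?case .
qed

lemma norm_sum_le_sq:
  fixes v :: "nat \<Rightarrow> 'a::real_normed_vector"
  shows "(norm (\<Sum>u<j. v u))\<^sup>2 \<le> real j * (\<Sum>u<j. (norm (v u))\<^sup>2)"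
proof -
  have "norm (\<Sum>u<j. v u) \<le> (\<Sum>u<j. norm (v u))" by (rule norm_sum)
  then have "(norm (\<Sum>u<j. v u))\<^sup>2 \<le> (\<Sum>u<j. norm (v u))\<^sup>2"
    by (simp add: power_mono)
  also have "\<dots> \<le> real j * (\<Sum>u<j. (norm (v u))\<^sup>2)" by (rule sum_sq_le)
  finally show ?thesis .
qed

lemma young_half:
  fixes a b d :: real
  assumes "0 \<le> b" "0 \<le> d" "a \<le> b + d" "0 \<le> a"
  shows "a\<^sup>2 \<le> 3/2 * b\<^sup>2 + 3 * d\<^sup>2"
proof -
  have "a\<^sup>2 \<le> (b + d)\<^sup>2" using assms by (simp add: power_mono)
  also have "\<dots> \<le> 3/2 * b\<^sup>2 + 3 * d\<^sup>2"
    using zero_le_power2[of "b - 2*d"] unfolding power2_eq_square by (simp add: algebra_simps)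
  finally show ?thesis .
qed

lemma young_one:
  fixes a b d :: real
  assumes "0 \<le> b" "0 \<le> d" "a \<le> b + d" "0 \<le> a"
  shows "a\<^sup>2 \<le> 2 * b\<^sup>2 + 2 * d\<^sup>2"
proof -
  have "a\<^sup>2 \<le> (b + d)\<^sup>2" using assms by (simp add: power_mono)
  also have "\<dots> \<le> 2 * b\<^sup>2 + 2 * d\<^sup>2"
    using sum_squares_bound[of b d] unfolding power2_eq_square by (simp add: algebra_simps)
  finally show ?thesis .
qed



locale gal =
  fixes f :: "'a::real_inner \<Rightarrow> real" and grad :: "'a \<Rightarrow> 'a" and L :: real
    and Pi :: "nat \<Rightarrow> 'a \<Rightarrow> 'a" and N x :: "nat \<Rightarrow> 'a"
    and \<beta> \<eta> \<delta> :: real and \<tau> :: nat and finf :: real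
  assumes grad: "\<And>y. (f has_derivative (\<lambda>h. inner (grad y) h)) (at y)"
    and lip: "\<And>y z. norm (grad y - grad z) \<le> L * norm (y - z)"
    and Lpos: "0 < L"
    and finf: "\<And>t. finf \<le> f (x t)"
    and adj: "\<And>t u v. inner (Pi t u) v = inner u (Pi t v)"
    and idem: "\<And>t v. Pi t (Pi t v) = Pi t v"
    and lin: "\<And>t a b u v. Pi t (a *\<^sub>R u + b *\<^sub>R v) = a *\<^sub>R Pi t u + b *\<^sub>R Pi t v"
    and keep: "\<And>t. Suc t mod \<tau> \<noteq> 0 \<Longrightarrow> Pi (Suc t) = Pi t"
    and svd: "\<And>t. t mod \<tau> = 0 \<Longrightarrow> \<delta> * (norm (grad (x t)))\<^sup>2 \<le> (norm (Pi t (grad (x t))))\<^sup>2"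
    and N0: "N 0 = Pi 0 (\<beta> *\<^sub>R grad (x 0))"
    and Nsuc: "\<And>t. N (Suc t) = Pi (Suc t) ((1 - \<beta>) *\<^sub>R N t + \<beta> *\<^sub>R grad (x (Suc t)))"
    and xsuc: "\<And>t. x (Suc t) = x t - \<eta> *\<^sub>R N t"
    and beta: "0 < \<beta>" "\<beta> \<le> 1" and tau: "1 \<le> \<tau>" and delta: "0 < \<delta>" "\<delta> \<le> 1"
    and eta: "0 < \<eta>" and c1: "L * \<eta> \<le> 1/4" and c2: "L\<^sup>2 * \<eta>\<^sup>2 \<le> 3 * \<delta> * \<beta>\<^sup>2 / 80"
    and c3: "L\<^sup>2 * \<eta>\<^sup>2 * (real \<tau>)\<^sup>2 \<le> 3 * \<delta> / 80"
    and c4: "64/3 \<le> real \<tau> * \<beta> * \<delta>"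
begin

definition "g t = grad (x t)"
definition "h t = Pi t (g t)"
definition "e t = N t - h t"
definition "A = L\<^sup>2 * \<eta>\<^sup>2"

lemma Pi_diff: "Pi t (u - v) = Pi t u - Pi t v"
  using lin[of t 1 u "-1" v] by simp

lemma Pi_scale: "Pi t (a *\<^sub>R u) = a *\<^sub>R Pi t u"
  using lin[of t a u 0 u] by simp

lemma Pi_sq: "(norm (Pi t v))\<^sup>2 = inner (Pi t v) v"
  by (metis adj idem power2_norm_eq_inner)

lemma Pi_norm: "norm (Pi t v) \<le> norm v"
proof -
  have "(norm (Pi t v))\<^sup>2 \<le> norm (Pi t v) * norm v"
    using Pi_sq norm_cauchy_schwarz by (metis)
  then show ?thesis
    by (metis mult_le_cancel_left_pos norm_ge_zero power2_eq_square order_refl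
        not_le mult_zero_left order.trans less_eq_real_def)
qed

lemma N_fix: "Pi t (N t) = N t"
  by (cases t) (simp_all add: N0 Nsuc idem)

lemma descent_step:
  "f (x (Suc t)) \<le> f (x t) - \<eta> / 2 * ((norm (h t))\<^sup>2 + (1 - 2 * L * \<eta>) * (norm (N t))\<^sup>2 - (norm (e t))\<^sup>2)"
proof -
  have d: "f (x (Suc t)) \<le> f (x t) + inner (g t) (x (Suc t) - x t) + L * (norm (x (Suc t) - x t))\<^sup>2"
    unfolding g_def by (rule descent_lemma[OF grad lip]) (use Lpos in auto)
  have i1: "inner (g t) (N t) = inner (h t) (N t)"
    unfolding h_def by (metis N_fix adj)
  have i2: "(norm (e t))\<^sup>2 = (norm (N t))\<^sup>2 - 2 * inner (h t) (N t) + (norm (h t))\<^sup>2"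
    unfolding e_def by (simp add: power2_norm_eq_inner inner_diff_left inner_diff_right inner_commute)
  have i3: "inner (h t) (N t) = ((norm (N t))\<^sup>2 + (norm (h t))\<^sup>2 - (norm (e t))\<^sup>2) / 2"
    using i2 by simp
  have "inner (g t) (x (Suc t) - x t) = - \<eta> * inner (h t) (N t)"
    using i1 by (simp add: xsuc)
  moreover have "(norm (x (Suc t) - x t))\<^sup>2 = \<eta>\<^sup>2 * (norm (N t))\<^sup>2"
    using eta by (simp add: xsuc power_mult_distrib)
  ultimately have "f (x (Suc t)) \<le> f (x t) - \<eta> * (((norm (N t))\<^sup>2 + (norm (h t))\<^sup>2 - (norm (e t))\<^sup>2) / 2)
     + L * (\<eta>\<^sup>2 * (norm (N t))\<^sup>2)" using d i3 by simp
  then show ?thesis by (simp add: field_simps power2_eq_square)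
qed

lemma telescope:
  "f (x T) \<le> f (x 0) - \<eta> / 2 * (\<Sum>t<T. (norm (h t))\<^sup>2 + (1 - 2 * L * \<eta>) * (norm (N t))\<^sup>2 - (norm (e t))\<^sup>2)"
proof (induction T)
  case 0 then show ?case by simp
next
  case (Suc T)
  then show ?case using descent_step[of T] by (simp add: algebra_simps)
qed

end


lemma young_beta:
  fixes a b \<beta> :: real
  assumes "0 < \<beta>" "\<beta> \<le> 1"
  shows "(1 - \<beta>)\<^sup>2 * (a + b)\<^sup>2 \<le> (1 - \<beta>) * a\<^sup>2 + (1 - \<beta>)\<^sup>2 / \<beta> * b\<^sup>2"
proof -
  have id: "\<beta> * (1 - \<beta>) * a\<^sup>2 + (1 - \<beta>)\<^sup>2 * b\<^sup>2 - \<beta> * ((1 - \<beta>)\<^sup>2 * (a + b)\<^sup>2)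
     = (1 - \<beta>) * (\<beta> * a - (1 - \<beta>) * b)\<^sup>2"
    unfolding power2_eq_square by (simp add: algebra_simps)
  have "0 \<le> (1 - \<beta>) * (\<beta> * a - (1 - \<beta>) * b)\<^sup>2" using assms by simp
  then have "\<beta> * ((1 - \<beta>)\<^sup>2 * (a + b)\<^sup>2) \<le> \<beta> * (1 - \<beta>) * a\<^sup>2 + (1 - \<beta>)\<^sup>2 * b\<^sup>2"
    using id by linarith
  also have "\<dots> = \<beta> * ((1 - \<beta>) * a\<^sup>2 + (1 - \<beta>)\<^sup>2 / \<beta> * b\<^sup>2)"
    using assms by (simp add: distrib_left)
  finally show ?thesis using assms by simp
qed

context gal begin

definition "B t = (if Suc t mod \<tau> = 0 then (norm (g t))\<^sup>2 else 0)"

lemma e_suc: "e (Suc t) = (1 - \<beta>) *\<^sub>R Pi (Suc t) (N t - g (Suc t))"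
  unfolding e_def h_def using lin[of "Suc t" "1 - \<beta>" "N t" \<beta> "g (Suc t)"]
  by (simp add: Nsuc g_def Pi_diff algebra_simps)

lemma e_fix: "Pi t (e t) = e t"
  unfolding e_def h_def by (simp add: Pi_diff N_fix idem)

lemma Ng_sq: "(norm (N t - g t))\<^sup>2 \<le> (norm (e t))\<^sup>2 + (norm (g t))\<^sup>2"
proof -
  have o: "inner (e t) (h t - g t) = 0"
    by (metis e_fix adj h_def idem inner_diff_right Pi_diff diff_self inner_zero_right)
  have hg: "(norm (h t - g t))\<^sup>2 = (norm (g t))\<^sup>2 - (norm (h t))\<^sup>2"
  proof -
    have "inner (h t) (g t) = (norm (h t))\<^sup>2" unfolding h_def by (simp add: Pi_sq)
    then show ?thesis
      by (simp add: power2_norm_eq_inner inner_diff_left inner_diff_right inner_commute)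
  qed
  have eqv: "N t - g t = e t + (h t - g t)" unfolding e_def by simp
  have sq: "(norm (e t + (h t - g t)))\<^sup>2 = (norm (e t))\<^sup>2 + (norm (h t - g t))\<^sup>2"
    using o by (simp add: power2_norm_eq_inner inner_add_left inner_add_right inner_commute[of "h t - g t" "e t"])
  show ?thesis unfolding eqv using sq hg by simp
qed

lemma g_step: "norm (g t - g (Suc t)) \<le> L * \<eta> * norm (N t)"
  using lip[of "x t" "x (Suc t)"] eta unfolding g_def by (simp add: xsuc)

lemma e_rec: "(norm (e (Suc t)))\<^sup>2 \<le> (1 - \<beta>) * (norm (e t))\<^sup>2 + B t + A / \<beta> * (norm (N t))\<^sup>2"
proof -
  define w where "w = Pi (Suc t) (N t - g (Suc t))"
  define b where "b = norm (g t - g (Suc t))"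
  obtain a where a: "0 \<le> a" "norm w \<le> a + b" "a\<^sup>2 \<le> (norm (e t))\<^sup>2 + B t"
  proof (cases "Suc t mod \<tau> = 0")
    case True
    have "norm w \<le> norm (N t - g (Suc t))" unfolding w_def by (rule Pi_norm)
    also have "\<dots> \<le> norm (N t - g t) + b"
    proof -
      have "N t - g (Suc t) = (N t - g t) + (g t - g (Suc t))" by simp
      then show ?thesis unfolding b_def by (metis norm_triangle_ineq)
    qed
    finally show ?thesis using that[of "norm (N t - g t)"] Ng_sq[of t] True by (simp add: B_def)
  next
    case False
    then have P: "Pi (Suc t) = Pi t" by (rule keep)
    have "w = e t + Pi t (g t - g (Suc t))"
      unfolding w_def P e_def h_def by (simp add: Pi_diff N_fix)
    then have "norm w \<le> norm (e t) + norm (Pi t (g t - g (Suc t)))" by (simp add: norm_triangle_ineq)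
    also have "\<dots> \<le> norm (e t) + b" unfolding b_def using Pi_norm by simp
    finally show ?thesis using that[of "norm (e t)"] False by (simp add: B_def)
  qed
  have bb: "b\<^sup>2 \<le> A * (norm (N t))\<^sup>2"
  proof -
    have "b\<^sup>2 \<le> (L * \<eta> * norm (N t))\<^sup>2" unfolding b_def using g_step by (simp add: power_mono)
    then show ?thesis by (simp add: A_def power_mult_distrib)
  qed
  have "(norm (e (Suc t)))\<^sup>2 = (1 - \<beta>)\<^sup>2 * (norm w)\<^sup>2"
    using beta by (simp add: e_suc w_def power_mult_distrib)
  also have "\<dots> \<le> (1 - \<beta>)\<^sup>2 * (a + b)\<^sup>2"
    using a beta by (intro mult_left_mono power_mono) auto
  also have "\<dots> \<le> (1 - \<beta>) * a\<^sup>2 + (1 - \<beta>)\<^sup>2 / \<beta> * b\<^sup>2" by (rule young_beta[OF beta])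
  also have "\<dots> \<le> (1 - \<beta>) * ((norm (e t))\<^sup>2 + B t) + 1 / \<beta> * (A * (norm (N t))\<^sup>2)"
  proof (intro add_mono mult_left_mono)
    show "(1 - \<beta>)\<^sup>2 / \<beta> * b\<^sup>2 \<le> 1 / \<beta> * (A * (norm (N t))\<^sup>2)"
    proof -
      have "(1 - \<beta>)\<^sup>2 * b\<^sup>2 \<le> 1 * (A * (norm (N t))\<^sup>2)"
        using bb beta by (intro mult_mono) (auto simp: power_le_one A_def)
      then show ?thesis using beta by (simp add: divide_right_mono)
    qed
  qed (use a beta in auto)
  also have "\<dots> \<le> (1 - \<beta>) * (norm (e t))\<^sup>2 + B t + A / \<beta> * (norm (N t))\<^sup>2"
  proof -
    have "0 \<le> B t" by (simp add: B_def)
    then have "(1 - \<beta>) * B t \<le> B t" using beta by (simp add: mult_left_le_one_le)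
    then show ?thesis by (simp add: algebra_simps)
  qed
  finally show ?thesis .
qed

lemma e_zero: "(norm (e 0))\<^sup>2 \<le> (norm (g 0))\<^sup>2"
proof -
  have "e 0 = (\<beta> - 1) *\<^sub>R Pi 0 (g 0)"
    unfolding e_def h_def by (simp add: N0 Pi_scale g_def algebra_simps)
  then have "norm (e 0) = (1 - \<beta>) * norm (Pi 0 (g 0))" using beta by simp
  also have "\<dots> \<le> 1 * norm (g 0)" using beta Pi_norm by (intro mult_mono) auto
  finally show ?thesis by (simp add: power_mono)
qed

end

context gal begin

definition "Gk k = (\<Sum>u<\<tau>. (norm (g (k * \<tau> + u)))\<^sup>2)"
definition "Hk k = (\<Sum>u<\<tau>. (norm (h (k * \<tau> + u)))\<^sup>2)"
definition "Nk k = (\<Sum>u<\<tau>. (norm (N (k * \<tau> + u)))\<^sup>2)"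

lemma Nk_nn: "0 \<le> Nk k" unfolding Nk_def by (simp add: sum_nonneg)
lemma A_nn: "0 \<le> A" unfolding A_def by simp

lemma Pi_period: "j < \<tau> \<Longrightarrow> Pi (k * \<tau> + j) = Pi (k * \<tau>)"
proof (induction j)
  case 0 then show ?case by simp
next
  case (Suc j)
  have "Suc (k * \<tau> + j) mod \<tau> = Suc j" using Suc.prems
    by (metis add_Suc_right mod_less mod_mult_self3 mult.commute)
  then have "Suc (k * \<tau> + j) mod \<tau> \<noteq> 0" by simp
  then have "Pi (Suc (k * \<tau> + j)) = Pi (k * \<tau> + j)" by (rule keep)
  then show ?case using Suc by simp
qed

lemma x_period: "x (k * \<tau> + j) = x (k * \<tau>) - \<eta> *\<^sub>R (\<Sum>u<j. N (k * \<tau> + u))"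
proof (induction j)
  case 0 then show ?case by simp
next
  case (Suc j)
  then show ?case by (simp add: xsuc algebra_simps)
qed

lemma drift: assumes "j \<le> \<tau>"
  shows "(norm (g (k * \<tau> + j) - g (k * \<tau>)))\<^sup>2 \<le> A * real \<tau> * Nk k"
proof -
  have "norm (g (k * \<tau> + j) - g (k * \<tau>)) \<le> L * norm (x (k * \<tau> + j) - x (k * \<tau>))"
    unfolding g_def by (rule lip)
  also have "\<dots> = L * \<eta> * norm (\<Sum>u<j. N (k * \<tau> + u))"
    using eta by (simp add: x_period)
  finally have "(norm (g (k * \<tau> + j) - g (k * \<tau>)))\<^sup>2 \<le> (L * \<eta> * norm (\<Sum>u<j. N (k * \<tau> + u)))\<^sup>2"
    by (simp add: power_mono)
  also have "\<dots> = A * (norm (\<Sum>u<j. N (k * \<tau> + u)))\<^sup>2"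
    by (simp add: A_def power_mult_distrib)
  also have "\<dots> \<le> A * (real j * (\<Sum>u<j. (norm (N (k * \<tau> + u)))\<^sup>2))"
    by (rule mult_left_mono[OF norm_sum_le_sq A_nn])
  also have "\<dots> \<le> A * (real \<tau> * Nk k)"
  proof (intro mult_left_mono A_nn mult_mono)
    show "(\<Sum>u<j. (norm (N (k * \<tau> + u)))\<^sup>2) \<le> Nk k"
      unfolding Nk_def using assms by (intro sum_mono2) auto
  qed (use assms Nk_nn in \<open>auto intro: sum_nonneg\<close>)
  finally show ?thesis by (simp add: mult.assoc)
qed

lemma per_t: assumes "j < \<tau>"
  shows "\<delta> * (norm (g (k * \<tau> + j)))\<^sup>2 \<le> 9/4 * (norm (h (k * \<tau> + j)))\<^sup>2 + 15/2 * (A * real \<tau> * Nk k)"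
proof -
  define D where "D = norm (g (k * \<tau> + j) - g (k * \<tau>))"
  have D2: "D\<^sup>2 \<le> A * real \<tau> * Nk k" unfolding D_def using drift assms by simp
  have "norm (g (k * \<tau> + j)) \<le> norm (g (k * \<tau>)) + D"
    unfolding D_def using norm_triangle_ineq[of "g (k * \<tau>)" "g (k * \<tau> + j) - g (k * \<tau>)"] by simp
  then have a: "(norm (g (k * \<tau> + j)))\<^sup>2 \<le> 3/2 * (norm (g (k * \<tau>)))\<^sup>2 + 3 * D\<^sup>2"
    by (intro young_half) (auto simp: D_def)
  have P: "Pi (k * \<tau> + j) = Pi (k * \<tau>)" using Pi_period assms by simp
  have eqP: "Pi (k * \<tau>) (g (k * \<tau>)) = h (k * \<tau> + j) + Pi (k * \<tau>) (g (k * \<tau>) - g (k * \<tau> + j))"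
    unfolding h_def P by (simp add: Pi_diff)
  have "norm (Pi (k * \<tau>) (g (k * \<tau>))) \<le> norm (h (k * \<tau> + j)) + D"
  proof -
    have "norm (Pi (k * \<tau>) (g (k * \<tau>) - g (k * \<tau> + j))) \<le> D"
      using Pi_norm[of "k * \<tau>" "g (k * \<tau>) - g (k * \<tau> + j)"] unfolding D_def
      by (simp add: norm_minus_commute)
    then show ?thesis unfolding eqP using norm_triangle_ineq[of "h (k * \<tau> + j)" "Pi (k * \<tau>) (g (k * \<tau>) - g (k * \<tau> + j))"]
      by simp
  qed
  then have p: "(norm (Pi (k * \<tau>) (g (k * \<tau>))))\<^sup>2 \<le> 3/2 * (norm (h (k * \<tau> + j)))\<^sup>2 + 3 * D\<^sup>2"
    by (intro young_half) (auto simp: D_def)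
  have s: "\<delta> * (norm (g (k * \<tau>)))\<^sup>2 \<le> (norm (Pi (k * \<tau>) (g (k * \<tau>))))\<^sup>2"
    using svd[of "k * \<tau>"] unfolding g_def by simp
  have "\<delta> * (norm (g (k * \<tau> + j)))\<^sup>2 \<le> \<delta> * (3/2 * (norm (g (k * \<tau>)))\<^sup>2 + 3 * D\<^sup>2)"
    using a delta by (intro mult_left_mono) auto
  also have "\<dots> = 3/2 * (\<delta> * (norm (g (k * \<tau>)))\<^sup>2) + 3 * (\<delta> * D\<^sup>2)" by (simp add: algebra_simps)
  also have "\<dots> \<le> 3/2 * (3/2 * (norm (h (k * \<tau> + j)))\<^sup>2 + 3 * D\<^sup>2) + 3 * D\<^sup>2"
  proof -
    have "\<delta> * D\<^sup>2 \<le> D\<^sup>2" using delta by (simp add: mult_left_le_one_le)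
    moreover have "3/2 * (\<delta> * (norm (g (k * \<tau>)))\<^sup>2) \<le> 3/2 * (3/2 * (norm (h (k * \<tau> + j)))\<^sup>2 + 3 * D\<^sup>2)"
      using s p by simp
    ultimately show ?thesis by (simp add: add_divide_distrib)
  qed
  also have "\<dots> \<le> 9/4 * (norm (h (k * \<tau> + j)))\<^sup>2 + 15/2 * (A * real \<tau> * Nk k)"
    using D2 by (simp add: field_simps)
  finally show ?thesis .
qed

lemma period_G: "\<delta> * Gk k \<le> 9/4 * Hk k + 15/2 * (A * (real \<tau>)\<^sup>2 * Nk k)"
proof -
  have "\<delta> * Gk k = (\<Sum>u<\<tau>. \<delta> * (norm (g (k * \<tau> + u)))\<^sup>2)" unfolding Gk_def by (simp add: sum_distrib_left)
  also have "\<dots> \<le> (\<Sum>u<\<tau>. 9/4 * (norm (h (k * \<tau> + u)))\<^sup>2 + 15/2 * (A * real \<tau> * Nk k))"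
    by (intro sum_mono per_t) auto
  also have "\<dots> = 9/4 * Hk k + 15/2 * (A * (real \<tau>)\<^sup>2 * Nk k)"
    unfolding Hk_def by (simp add: sum.distrib sum_distrib_left power2_eq_square algebra_simps)
  finally show ?thesis .
qed

lemma bnd: assumes "s < \<tau>"
  shows "real \<tau> * (norm (g (k * \<tau> + s)))\<^sup>2 \<le> 2 * Gk k + 8 * (A * (real \<tau>)\<^sup>2 * Nk k)"
proof -
  have one: "(norm (g (k * \<tau> + s)))\<^sup>2 \<le> 2 * (norm (g (k * \<tau> + u)))\<^sup>2 + 8 * (A * real \<tau> * Nk k)"
    if u: "u < \<tau>" for u
  proof -
    define Ds where "Ds = norm (g (k * \<tau> + s) - g (k * \<tau>))"
    define Du where "Du = norm (g (k * \<tau> + u) - g (k * \<tau>))"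
    have Ds2: "Ds\<^sup>2 \<le> A * real \<tau> * Nk k" unfolding Ds_def using drift assms by simp
    have Du2: "Du\<^sup>2 \<le> A * real \<tau> * Nk k" unfolding Du_def using drift u by simp
    have "norm (g (k * \<tau> + s) - g (k * \<tau> + u)) \<le> Ds + Du"
      unfolding Ds_def Du_def
      using norm_triangle_ineq4[of "g (k * \<tau> + s) - g (k * \<tau>)" "g (k * \<tau> + u) - g (k * \<tau>)"] by simp
    then have c: "(norm (g (k * \<tau> + s) - g (k * \<tau> + u)))\<^sup>2 \<le> 2 * Ds\<^sup>2 + 2 * Du\<^sup>2"
      by (intro young_one) (auto simp: Ds_def Du_def)
    have "norm (g (k * \<tau> + s)) \<le> norm (g (k * \<tau> + u)) + norm (g (k * \<tau> + s) - g (k * \<tau> + u))"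
      using norm_triangle_ineq[of "g (k * \<tau> + u)" "g (k * \<tau> + s) - g (k * \<tau> + u)"] by simp
    then have "(norm (g (k * \<tau> + s)))\<^sup>2 \<le> 2 * (norm (g (k * \<tau> + u)))\<^sup>2 + 2 * (norm (g (k * \<tau> + s) - g (k * \<tau> + u)))\<^sup>2"
      by (intro young_one) auto
    then show ?thesis using c Ds2 Du2 by linarith
  qed
  have "real \<tau> * (norm (g (k * \<tau> + s)))\<^sup>2 = (\<Sum>u<\<tau>. (norm (g (k * \<tau> + s)))\<^sup>2)" by simp
  also have "\<dots> \<le> (\<Sum>u<\<tau>. 2 * (norm (g (k * \<tau> + u)))\<^sup>2 + 8 * (A * real \<tau> * Nk k))"
    by (intro sum_mono one) auto
  also have "\<dots> = 2 * Gk k + 8 * (A * (real \<tau>)\<^sup>2 * Nk k)"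
    unfolding Gk_def by (simp add: sum.distrib sum_distrib_left power2_eq_square algebra_simps)
  finally show ?thesis .
qed

lemma Bk: "(\<Sum>u<\<tau>. B (k * \<tau> + u)) = (norm (g (k * \<tau> + (\<tau> - 1))))\<^sup>2"
proof -
  obtain p where p: "\<tau> = Suc p" using tau by (cases \<tau>) auto
  have z: "B (k * \<tau> + u) = 0" if "u < p" for u
  proof -
    have "Suc (k * \<tau> + u) mod \<tau> = Suc u" using that p
      by (metis add_Suc_right less_Suc_eq mod_less mod_mult_self3 mult.commute Suc_less_eq)
    then show ?thesis unfolding B_def by simp
  qed
  have "Suc (k * \<tau> + p) = Suc k * \<tau>" using p by simp
  then have l: "Suc (k * \<tau> + p) mod \<tau> = 0" by simp
  have "(\<Sum>u<\<tau>. B (k * \<tau> + u)) = (\<Sum>u<p. B (k * \<tau> + u)) + B (k * \<tau> + p)" using p by simp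
  also have "\<dots> = B (k * \<tau> + p)" using z by simp
  finally show ?thesis using l p unfolding B_def by simp
qed

end


lemma regroup:
  fixes K p :: nat and F :: "nat \<Rightarrow> 'b::comm_monoid_add"
  shows "(\<Sum>t<K * p. F t) = (\<Sum>k<K. \<Sum>u<p. F (k * p + u)) "
proof -
  have "sum F {k * p..<k * p + p} = (\<Sum>u<p. F (k * p + u))" for k
    using sum.atLeastLessThan_shift_0[of F "k * p" "k * p + p"] by (simp add: atLeast0LessThan o_def)
  then show ?thesis using sum.nat_group[where g=F and k=p and n=K] by simp
qed

context gal begin

lemma main_bound:
  assumes K: "1 \<le> K"
  shows "\<delta> * \<eta> * (\<Sum>t<K * \<tau>. (norm (grad (x t)))\<^sup>2) \<le> 16 * (f (x 0) - finf)"
proof -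
  define T where "T = K * \<tau>"
  define G where "G = (\<Sum>t<T. (norm (g t))\<^sup>2)"
  define H where "H = (\<Sum>t<T. (norm (h t))\<^sup>2)"
  define Nn where "Nn = (\<Sum>t<T. (norm (N t))\<^sup>2)"
  define E where "E = (\<Sum>t<T. (norm (e t))\<^sup>2)"
  define Bt where "Bt = (\<Sum>t<T. B t)"
  have G_eq: "G = (\<Sum>k<K. Gk k)" unfolding G_def T_def Gk_def by (rule regroup)
  have H_eq: "H = (\<Sum>k<K. Hk k)" unfolding H_def T_def Hk_def by (rule regroup)
  have N_eq: "Nn = (\<Sum>k<K. Nk k)" unfolding Nn_def T_def Nk_def by (rule regroup)
  have B_eq: "Bt = (\<Sum>k<K. (norm (g (k * \<tau> + (\<tau> - 1))))\<^sup>2)"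
    unfolding Bt_def T_def by (simp add: regroup Bk)
  have Gnn: "0 \<le> G" "0 \<le> H" "0 \<le> Nn" "0 \<le> E"
    unfolding G_def H_def Nn_def E_def by (auto intro: sum_nonneg)
  have taupos: "0 < real \<tau>" using tau by simp
  have totG: "\<delta> * G \<le> 9/4 * H + 15/2 * (A * (real \<tau>)\<^sup>2 * Nn)"
  proof -
    have "\<delta> * G = (\<Sum>k<K. \<delta> * Gk k)" unfolding G_eq by (simp add: sum_distrib_left)
    also have "\<dots> \<le> (\<Sum>k<K. 9/4 * Hk k + 15/2 * (A * (real \<tau>)\<^sup>2 * Nk k))"
      by (intro sum_mono period_G)
    also have "\<dots> = 9/4 * H + 15/2 * (A * (real \<tau>)\<^sup>2 * Nn)"
      unfolding H_eq N_eq by (simp add: sum.distrib sum_distrib_left)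
    finally show ?thesis .
  qed
  have totB: "real \<tau> * Bt \<le> 2 * G + 8 * (A * (real \<tau>)\<^sup>2 * Nn)"
  proof -
    have "real \<tau> * Bt = (\<Sum>k<K. real \<tau> * (norm (g (k * \<tau> + (\<tau> - 1))))\<^sup>2)"
      unfolding B_eq by (simp add: sum_distrib_left)
    also have "\<dots> \<le> (\<Sum>k<K. 2 * Gk k + 8 * (A * (real \<tau>)\<^sup>2 * Nk k))"
      using tau by (intro sum_mono bnd) auto
    also have "\<dots> = 2 * G + 8 * (A * (real \<tau>)\<^sup>2 * Nn)"
      unfolding G_eq N_eq by (simp add: sum.distrib sum_distrib_left)
    finally show ?thesis .
  qed
  have tot0: "real \<tau> * (norm (g 0))\<^sup>2 \<le> 2 * G + 8 * (A * (real \<tau>)\<^sup>2 * Nn)"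
  proof -
    have "real \<tau> * (norm (g (0 * \<tau> + 0)))\<^sup>2 \<le> 2 * Gk 0 + 8 * (A * (real \<tau>)\<^sup>2 * Nk 0)"
      using tau by (intro bnd) auto
    moreover have "Gk 0 \<le> G" unfolding G_eq
      using K by (intro member_le_sum) (auto simp: Gk_def intro: sum_nonneg)
    moreover have "Nk 0 \<le> Nn" unfolding N_eq
      using K by (intro member_le_sum) (auto simp: Nk_def intro: sum_nonneg)
    moreover have "0 \<le> A * (real \<tau>)\<^sup>2" using A_nn by simp
    ultimately show ?thesis
      by (smt (verit, best) mult_left_mono add_0 mult_zero_left)
  qed
  have totE: "\<beta> * E \<le> (norm (g 0))\<^sup>2 + Bt + A / \<beta> * Nn"
  proof -
    have "\<beta> * E \<le> (norm (g 0))\<^sup>2 + (\<Sum>t<T. B t + A / \<beta> * (norm (N t))\<^sup>2)"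
      unfolding E_def
    proof (rule geo_sum[where e="\<lambda>t. (norm (e t))\<^sup>2" and b="\<lambda>t. B t + A / \<beta> * (norm (N t))\<^sup>2", OF e_zero])
      show "0 \<le> B t + A / \<beta> * (norm (N t))\<^sup>2" for t
        using A_nn beta by (auto simp: B_def)
      show "(norm (e (Suc t)))\<^sup>2 \<le> (1 - \<beta>) * (norm (e t))\<^sup>2 + (B t + A / \<beta> * (norm (N t))\<^sup>2)" for t
        using e_rec[of t] by (simp add: add.assoc)
    qed (use beta in auto)
    then show ?thesis unfolding Bt_def Nn_def by (simp add: sum.distrib sum_distrib_left)
  qed
  have desc: "f (x T) \<le> f (x 0) - \<eta> / 2 * (H + (1 - 2 * L * \<eta>) * Nn - E)"
    using telescope[of T] unfolding H_def Nn_def E_def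
    by (simp add: sum.distrib sum_subtractf sum_distrib_left)
  have fT: "finf \<le> f (x T)" by (rule finf)
  define q where "q = real \<tau> * \<beta>"
  have qpos: "0 < q" unfolding q_def using taupos beta by simp
  have qd: "64/3 \<le> q * \<delta>" unfolding q_def using c4 by simp
  have At2: "A * (real \<tau>)\<^sup>2 \<le> 3 * \<delta> / 80" using c3 unfolding A_def by simp
  have Ab: "A / \<beta>\<^sup>2 \<le> 3 * \<delta> / 80"
    using c2 beta unfolding A_def by (simp add: divide_le_eq mult.commute)
  have qE: "q * E \<le> 4 * G + 16 * (A * (real \<tau>)\<^sup>2 * Nn) + q * (A / \<beta>\<^sup>2) * Nn"
  proof -
    have "q * E = real \<tau> * (\<beta> * E)" unfolding q_def by simp
    also have "\<dots> \<le> real \<tau> * ((norm (g 0))\<^sup>2 + Bt + A / \<beta> * Nn)"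
      using totE taupos by (intro mult_left_mono) auto
    also have "\<dots> = real \<tau> * (norm (g 0))\<^sup>2 + real \<tau> * Bt + q * (A / \<beta>\<^sup>2) * Nn"
      unfolding q_def using beta by (simp add: field_simps power2_eq_square)
    also have "\<dots> \<le> 4 * G + 16 * (A * (real \<tau>)\<^sup>2 * Nn) + q * (A / \<beta>\<^sup>2) * Nn"
      using tot0 totB by simp
    finally show ?thesis .
  qed
  have Eb: "E \<le> 3 * \<delta> / 16 * G + 7/100 * Nn"
  proof -
    have a1: "4 * G \<le> q * (3 * \<delta> / 16) * G"
    proof -
      have "4 \<le> q * (3 * \<delta> / 16)" using qd by simp
      then show ?thesis using Gnn by (intro mult_right_mono) auto
    qed
    have a2: "16 * (A * (real \<tau>)\<^sup>2 * Nn) \<le> q * (3/100) * Nn"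
    proof -
      have "16 * (A * (real \<tau>)\<^sup>2) \<le> 16 * (3 * \<delta> / 80)" using At2 by simp
      also have "\<dots> \<le> q * (3/100)"
      proof -
        have dd: "\<delta> * \<delta> \<le> 1" using delta by (simp add: mult_le_one)
        have "16 * (3 * \<delta> / 80) * \<delta> = 3/5 * (\<delta> * \<delta>)" by simp
        also have "\<dots> \<le> 3/5" using dd by simp
        also have "\<dots> \<le> (3/100) * (q * \<delta>)" using qd by (simp add: mult.commute)
        finally have "16 * (3 * \<delta> / 80) * \<delta> \<le> q * (3/100) * \<delta>" by (simp add: mult_ac)
        then show ?thesis using delta by simp
      qed
      finally have "16 * (A * (real \<tau>)\<^sup>2) * Nn \<le> q * (3/100) * Nn"
        using Gnn by (intro mult_right_mono) auto
      then show ?thesis by (simp add: mult.assoc)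
    qed
    have a3: "q * (A / \<beta>\<^sup>2) * Nn \<le> q * (3 * \<delta> / 80) * Nn"
      using Ab qpos Gnn by (intro mult_right_mono mult_left_mono) auto
    have a4: "q * (3 * \<delta> / 80) * Nn \<le> q * (3/80) * Nn"
      using delta qpos Gnn by (intro mult_right_mono mult_left_mono) auto
    have "q * E \<le> q * (3 * \<delta> / 16) * G + q * (3/100) * Nn + q * (3/80) * Nn"
      using qE a1 a2 a3 a4 by linarith
    also have "\<dots> = q * (3 * \<delta> / 16 * G + 27/400 * Nn)" by (simp add: algebra_simps)
    finally have "E \<le> 3 * \<delta> / 16 * G + 27/400 * Nn" using qpos by simp
    then show ?thesis using Gnn by simp
  qed
  have c1': "1/2 \<le> 1 - 2 * L * \<eta>" using c1 by simp
  have Nh: "1/2 * Nn \<le> (1 - 2 * L * \<eta>) * Nn" using c1' Gnn by (intro mult_right_mono) auto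
  have dG: "\<delta> * G \<le> 9/4 * H + 9/32 * Nn"
  proof -
    have "A * (real \<tau>)\<^sup>2 * Nn \<le> 3 * \<delta> / 80 * Nn" using At2 Gnn by (intro mult_right_mono) auto
    also have "\<dots> \<le> 3 / 80 * Nn" using delta Gnn by (intro mult_right_mono) auto
    finally show ?thesis using totG by simp
  qed
  have dGE: "\<delta> * G \<le> \<delta> * G" ..
  have key: "\<delta> * G / 8 \<le> H + (1 - 2 * L * \<eta>) * Nn - E"
  proof -
    have "\<delta> * G * (3/16) = 3 * \<delta> / 16 * G" by simp
    then show ?thesis using Eb Nh dG Gnn by (simp add: field_simps)
  qed
  have "\<eta> / 2 * (\<delta> * G / 8) \<le> \<eta> / 2 * (H + (1 - 2 * L * \<eta>) * Nn - E)"
    using key eta by (intro mult_left_mono) auto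
  also have "\<dots> \<le> f (x 0) - finf" using desc fT by simp
  finally have "\<delta> * \<eta> * G \<le> 16 * (f (x 0) - finf)" by (simp add: field_simps)
  then show ?thesis unfolding G_def T_def g_def .
qed

end


definition frob :: "real mat \<Rightarrow> real mat \<Rightarrow> real" where
  "frob A B = (\<Sum>i<dim_row A. \<Sum>j<dim_col A. A $$ (i,j) * B $$ (i,j))"

lemma frob_adj:
  assumes A: "A \<in> carrier_mat p q" and X: "X \<in> carrier_mat q k" and Y: "Y \<in> carrier_mat p k"
  shows "frob (A * X) Y = frob X (transpose_mat A * Y)"
proof -
  have "frob (A * X) Y = (\<Sum>i<p. \<Sum>j<k. (\<Sum>s<q. A $$ (i,s) * X $$ (s,j)) * Y $$ (i,j))"
    using A X Y unfolding frob_def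
    by (auto simp: scalar_prod_def atLeast0LessThan intro!: sum.cong)
  also have "\<dots> = (\<Sum>i<p. \<Sum>j<k. \<Sum>s<q. X $$ (s,j) * (A $$ (i,s) * Y $$ (i,j)))"
    by (simp add: sum_distrib_left sum_distrib_right mult_ac)
  also have "\<dots> = (\<Sum>j<k. \<Sum>i<p. \<Sum>s<q. X $$ (s,j) * (A $$ (i,s) * Y $$ (i,j)))"
    by (rule sum.swap)
  also have "\<dots> = (\<Sum>j<k. \<Sum>s<q. \<Sum>i<p. X $$ (s,j) * (A $$ (i,s) * Y $$ (i,j)))"
    by (intro sum.cong refl sum.swap)
  also have "\<dots> = (\<Sum>s<q. \<Sum>j<k. \<Sum>i<p. X $$ (s,j) * (A $$ (i,s) * Y $$ (i,j)))"
    by (rule sum.swap)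
  also have "\<dots> = frob X (transpose_mat A * Y)"
    using A X Y unfolding frob_def
    by (auto simp: scalar_prod_def atLeast0LessThan sum_distrib_left intro!: sum.cong)
  finally show ?thesis .
qed

lemma frob_tr:
  assumes "A \<in> carrier_mat p q" "B \<in> carrier_mat p q"
  shows "frob A B = frob (transpose_mat A) (transpose_mat B)"
  using assms unfolding frob_def by (auto intro: sum.swap)

lemma frob_sym:
  assumes "A \<in> carrier_mat p q" "B \<in> carrier_mat p q"
  shows "frob A B = frob B A"
  using assms unfolding frob_def by (auto simp: mult.commute)

lemma frob_adjR:
  assumes X: "X \<in> carrier_mat p q" and C: "C \<in> carrier_mat q k" and Y: "Y \<in> carrier_mat p k"
  shows "frob (X * C) Y = frob X (Y * transpose_mat C)"
proof -
  have "frob (X * C) Y = frob (transpose_mat (X * C)) (transpose_mat Y)"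
    using X C Y by (intro frob_tr) auto
  also have "transpose_mat (X * C) = transpose_mat C * transpose_mat X"
    using X C by (rule transpose_mult)
  also have "frob (transpose_mat C * transpose_mat X) (transpose_mat Y)
      = frob (transpose_mat X) (transpose_mat (transpose_mat C) * transpose_mat Y)"
    using X C Y by (intro frob_adj) auto
  also have "transpose_mat (transpose_mat C) * transpose_mat Y = transpose_mat (Y * transpose_mat C)"
    using C Y by (simp add: transpose_mult[of Y p k "transpose_mat C" q])
  also have "frob (transpose_mat X) (transpose_mat (Y * transpose_mat C)) = frob X (Y * transpose_mat C)"
    using X C Y by (intro frob_tr[symmetric]) auto
  finally show ?thesis .
qed

lemma frob_add_left:
  assumes "A \<in> carrier_mat p q" "B \<in> carrier_mat p q" "C \<in> carrier_mat p q"
  shows "frob (A + B) C = frob A C + frob B C"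
  using assms unfolding frob_def by (auto simp: sum.distrib distrib_right)

lemma frob_smult_left:
  assumes "A \<in> carrier_mat p q"
  shows "frob (c \<cdot>\<^sub>m A) C = c * frob A C"
  using assms unfolding frob_def by (auto simp: sum_distrib_left mult.assoc)

lemma frob_nonneg: "0 \<le> frob A A"
  unfolding frob_def by (auto intro!: sum_nonneg)



section \<open>Left projections\<close>

lemma lp_carrier: "(P :: real mat) \<in> carrier_mat m r \<Longrightarrow> X \<in> carrier_mat m n \<Longrightarrow> P * (transpose_mat P * X) \<in> carrier_mat m n"
  by auto

lemma lp_idem:
  assumes P: "(P :: real mat) \<in> carrier_mat m r" and O: "transpose_mat P * P = 1\<^sub>m r" and X: "X \<in> carrier_mat m n"
  shows "P * (transpose_mat P * (P * (transpose_mat P * X))) = P * (transpose_mat P * X)"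
proof -
  have "transpose_mat P * (P * (transpose_mat P * X)) = (transpose_mat P * P) * (transpose_mat P * X)"
    using P X by (simp add: assoc_mult_mat[of _ r m _ r _ n])
  also have "\<dots> = transpose_mat P * X" using O P X left_mult_one_mat[of "transpose_mat P * X" r n] by auto
  finally show ?thesis by simp
qed

lemma lp_adj:
  assumes P: "(P :: real mat) \<in> carrier_mat m r" and X: "X \<in> carrier_mat m n" and Y: "Y \<in> carrier_mat m n"
  shows "frob (P * (transpose_mat P * X)) Y = frob X (P * (transpose_mat P * Y))"
proof -
  have "frob (P * (transpose_mat P * X)) Y = frob (transpose_mat P * X) (transpose_mat P * Y)"
    using P X Y by (intro frob_adj) auto
  also have "\<dots> = frob (transpose_mat P * Y) (transpose_mat P * X)"
    using P X Y by (intro frob_sym) auto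
  also have "\<dots> = frob (P * (transpose_mat P * Y)) X"
    using P X Y by (intro frob_adj[symmetric]) auto
  also have "\<dots> = frob X (P * (transpose_mat P * Y))"
    using P X Y by (intro frob_sym) auto
  finally show ?thesis .
qed

lemma lp_lin:
  assumes P: "(P :: real mat) \<in> carrier_mat m r" and X: "X \<in> carrier_mat m n" and Y: "Y \<in> carrier_mat m n"
  shows "P * (transpose_mat P * (a \<cdot>\<^sub>m X + b \<cdot>\<^sub>m Y)) = a \<cdot>\<^sub>m (P * (transpose_mat P * X)) + b \<cdot>\<^sub>m (P * (transpose_mat P * Y))"
proof -
  have "transpose_mat P * (a \<cdot>\<^sub>m X + b \<cdot>\<^sub>m Y) = transpose_mat P * (a \<cdot>\<^sub>m X) + transpose_mat P * (b \<cdot>\<^sub>m Y)"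
    using P X Y by (intro mult_add_distrib_mat[of _ r m _ n]) auto
  also have "\<dots> = a \<cdot>\<^sub>m (transpose_mat P * X) + b \<cdot>\<^sub>m (transpose_mat P * Y)"
    using P X Y mult_smult_distrib[of "transpose_mat P" r m X n] mult_smult_distrib[of "transpose_mat P" r m Y n] by auto
  finally have e1: "transpose_mat P * (a \<cdot>\<^sub>m X + b \<cdot>\<^sub>m Y) = a \<cdot>\<^sub>m (transpose_mat P * X) + b \<cdot>\<^sub>m (transpose_mat P * Y)" .
  have "P * (a \<cdot>\<^sub>m (transpose_mat P * X) + b \<cdot>\<^sub>m (transpose_mat P * Y))
      = P * (a \<cdot>\<^sub>m (transpose_mat P * X)) + P * (b \<cdot>\<^sub>m (transpose_mat P * Y))"
    using P X Y by (intro mult_add_distrib_mat[of _ m r _ n]) auto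
  also have "\<dots> = a \<cdot>\<^sub>m (P * (transpose_mat P * X)) + b \<cdot>\<^sub>m (P * (transpose_mat P * Y))"
    using P X Y mult_smult_distrib[of P m r "transpose_mat P * X" n] mult_smult_distrib[of P m r "transpose_mat P * Y" n] by auto
  finally show ?thesis using e1 by simp
qed

section \<open>Right projections\<close>

lemma rp_idem:
  assumes Q: "(Q :: real mat) \<in> carrier_mat n r" and O: "transpose_mat Q * Q = 1\<^sub>m r" and X: "X \<in> carrier_mat m n"
  shows "X * Q * transpose_mat Q * Q * transpose_mat Q = X * Q * transpose_mat Q"
proof -
  have "X * Q * transpose_mat Q * Q = X * Q * (transpose_mat Q * Q)"
    using Q X by (intro assoc_mult_mat[of _ m r _ n _ r]) auto
  also have "\<dots> = X * Q" using O Q X right_mult_one_mat[of "X * Q" m r] by auto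
  finally show ?thesis by simp
qed

lemma rp_adj:
  assumes Q: "(Q :: real mat) \<in> carrier_mat n r" and X: "X \<in> carrier_mat m n" and Y: "Y \<in> carrier_mat m n"
  shows "frob (X * Q * transpose_mat Q) Y = frob X (Y * Q * transpose_mat Q)"
proof -
  have "frob (X * Q * transpose_mat Q) Y = frob (X * Q) (Y * Q)"
    using Q X Y frob_adjR[of "X * Q" m r "transpose_mat Q" n Y] by auto
  also have "\<dots> = frob (Y * Q) (X * Q)"
    using Q X Y by (intro frob_sym) auto
  also have "\<dots> = frob (Y * Q * transpose_mat Q) X"
    using Q X Y frob_adjR[of "Y * Q" m r "transpose_mat Q" n X] by auto
  also have "\<dots> = frob X (Y * Q * transpose_mat Q)"
    using Q X Y by (intro frob_sym) auto
  finally show ?thesis .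
qed

lemma rp_lin:
  assumes Q: "(Q :: real mat) \<in> carrier_mat n r" and X: "X \<in> carrier_mat m n" and Y: "Y \<in> carrier_mat m n"
  shows "(a \<cdot>\<^sub>m X + b \<cdot>\<^sub>m Y) * Q * transpose_mat Q = a \<cdot>\<^sub>m (X * Q * transpose_mat Q) + b \<cdot>\<^sub>m (Y * Q * transpose_mat Q)"
proof -
  have "(a \<cdot>\<^sub>m X + b \<cdot>\<^sub>m Y) * Q = (a \<cdot>\<^sub>m X) * Q + (b \<cdot>\<^sub>m Y) * Q"
    using Q X Y by (intro add_mult_distrib_mat[of _ m n _ _ r]) auto
  also have "\<dots> = a \<cdot>\<^sub>m (X * Q) + b \<cdot>\<^sub>m (Y * Q)"
    using Q X Y mult_smult_assoc_mat[OF X Q] mult_smult_assoc_mat[OF Y Q] by auto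
  finally have e1: "(a \<cdot>\<^sub>m X + b \<cdot>\<^sub>m Y) * Q = a \<cdot>\<^sub>m (X * Q) + b \<cdot>\<^sub>m (Y * Q)" .
  have "(a \<cdot>\<^sub>m (X * Q) + b \<cdot>\<^sub>m (Y * Q)) * transpose_mat Q
     = (a \<cdot>\<^sub>m (X * Q)) * transpose_mat Q + (b \<cdot>\<^sub>m (Y * Q)) * transpose_mat Q"
    using Q X Y by (intro add_mult_distrib_mat[of _ m r _ _ n]) auto
  also have "\<dots> = a \<cdot>\<^sub>m (X * Q * transpose_mat Q) + b \<cdot>\<^sub>m (Y * Q * transpose_mat Q)"
  proof -
    have c: "X * Q \<in> carrier_mat m r" "Y * Q \<in> carrier_mat m r" "transpose_mat Q \<in> carrier_mat r n"
      using Q X Y by auto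
    show ?thesis using mult_smult_assoc_mat[OF c(1) c(3)] mult_smult_assoc_mat[OF c(2) c(3)] by simp
  qed
  finally show ?thesis using e1 by simp
qed

lemma first_cols_carrier: "(U :: real mat) \<in> carrier_mat m m \<Longrightarrow> first_cols r U \<in> carrier_mat m r"
  unfolding first_cols_def by auto

lemma first_cols_orth:
  assumes U: "U \<in> carrier_mat m m" and O: "transpose_mat U * U = 1\<^sub>m m" and r: "r \<le> m"
  shows "transpose_mat (first_cols r U) * first_cols r U = 1\<^sub>m r"
proof (rule eq_matI)
  fix i j assume ij: "i < dim_row (1\<^sub>m r)" "j < dim_col (1\<^sub>m r)"
  then have ij': "i < r" "j < r" by auto
  have "(transpose_mat (first_cols r U) * first_cols r U) $$ (i, j) = (transpose_mat U * U) $$ (i, j)"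
    using U ij' r unfolding first_cols_def by (simp add: scalar_prod_def)
  also have "\<dots> = 1\<^sub>m r $$ (i, j)" using O ij' r by simp
  finally show "(transpose_mat (first_cols r U) * first_cols r U) $$ (i, j) = 1\<^sub>m r $$ (i, j)" .
qed (use U in \<open>auto simp: first_cols_def\<close>)



lemma avg_sorted:
  fixes a :: "nat \<Rightarrow> real"
  assumes mono: "\<And>i j. i \<le> j \<Longrightarrow> j < p \<Longrightarrow> a j \<le> a i" and r: "r \<le> p"
  shows "real r * (\<Sum>i<p. a i) \<le> real p * (\<Sum>i<r. a i)"
proof -
  have "0 \<le> (\<Sum>i<r. \<Sum>j\<in>{r..<p}. a i - a j)"
    using mono by (intro sum_nonneg) auto
  also have "\<dots> = (\<Sum>i<r. real (p - r) * a i - (\<Sum>j\<in>{r..<p}. a j))"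
    by (simp add: sum_subtractf)
  also have "\<dots> = real (p - r) * (\<Sum>i<r. a i) - real r * (\<Sum>j\<in>{r..<p}. a j)"
    by (simp add: sum_subtractf sum_distrib_left)
  finally have 1: "real r * (\<Sum>j\<in>{r..<p}. a j) \<le> (real p - real r) * (\<Sum>i<r. a i)"
    using r by (simp add: of_nat_diff)
  have 2: "(\<Sum>i<p. a i) = (\<Sum>i<r. a i) + (\<Sum>j\<in>{r..<p}. a j)"
    using r by (metis atLeast0LessThan sum.atLeastLessThan_concat zero_le)
  show ?thesis using 1 2 by (simp add: algebra_simps)
qed

lemma diag_rows:
  assumes S: "(S :: real mat) \<in> carrier_mat m n" and off: "\<forall>i<m. \<forall>j<n. i \<noteq> j \<longrightarrow> S $$ (i,j) = 0"
    and k: "k \<le> m"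
  shows "(\<Sum>i<k. \<Sum>j<n. S $$ (i,j) * S $$ (i,j)) = (\<Sum>i<min k n. (S $$ (i,i))\<^sup>2)"
proof -
  have "(\<Sum>j<n. S $$ (i,j) * S $$ (i,j)) = (if i < n then (S $$ (i,i))\<^sup>2 else 0)" if i: "i < k" for i
  proof -
    have "(\<Sum>j<n. S $$ (i,j) * S $$ (i,j)) = (\<Sum>j<n. if j = i then (S $$ (i,i))\<^sup>2 else 0)"
      using off i k by (intro sum.cong) (auto simp: power2_eq_square)
    also have "\<dots> = (if i < n then (S $$ (i,i))\<^sup>2 else 0)"
      by (simp add: sum.delta')
    finally show ?thesis .
  qed
  then have "(\<Sum>i<k. \<Sum>j<n. S $$ (i,j) * S $$ (i,j)) = (\<Sum>i<k. if i \<in> {..<n} then (S $$ (i,i))\<^sup>2 else 0)"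
    by (intro sum.cong) auto
  also have "\<dots> = (\<Sum>i\<in>{..<k} \<inter> {..<n}. (S $$ (i,i))\<^sup>2)"
    by (simp add: sum.inter_restrict)
  also have "{..<k} \<inter> {..<n} = {..<min k n}" by auto
  finally show ?thesis .
qed

lemma orth_left:
  assumes U: "(U :: real mat) \<in> carrier_mat m m" and O: "transpose_mat U * U = 1\<^sub>m m"
    and Z: "Z \<in> carrier_mat m k"
  shows "frob (U * Z) (U * Z) = frob Z Z"
proof -
  have "frob (U * Z) (U * Z) = frob Z (transpose_mat U * (U * Z))"
    using U Z by (intro frob_adj) auto
  also have "transpose_mat U * (U * Z) = (transpose_mat U * U) * Z"
    using U Z by (intro assoc_mult_mat[symmetric]) auto
  also have "\<dots> = Z" using O Z by simp
  finally show ?thesis .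
qed

lemma orth_right:
  assumes V: "(V :: real mat) \<in> carrier_mat n n" and O: "transpose_mat V * V = 1\<^sub>m n"
    and Z: "Z \<in> carrier_mat k n"
  shows "frob (Z * transpose_mat V) (Z * transpose_mat V) = frob Z Z"
proof -
  have "frob (Z * transpose_mat V) (Z * transpose_mat V) = frob Z (Z * transpose_mat V * transpose_mat (transpose_mat V))"
    using V Z by (intro frob_adjR) auto
  also have "Z * transpose_mat V * transpose_mat (transpose_mat V) = Z * (transpose_mat V * V)"
    using V Z by (simp add: assoc_mult_mat[of Z k n "transpose_mat V" n V n])
  also have "\<dots> = Z" using O Z by simp
  finally show ?thesis .
qed

lemma PtU:
  assumes U: "(U :: real mat) \<in> carrier_mat m m" and O: "transpose_mat U * U = 1\<^sub>m m" and r: "r \<le> m"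
    and i: "i < r" and k: "k < m"
  shows "(transpose_mat (first_cols r U) * U) $$ (i, k) = (if i = k then 1 else 0)"
proof -
  have "(transpose_mat (first_cols r U) * U) $$ (i, k) = (transpose_mat U * U) $$ (i, k)"
    using U i k r unfolding first_cols_def by (simp add: scalar_prod_def)
  also have "\<dots> = (if i = k then 1 else 0)" using O i k r by simp
  finally show ?thesis .
qed

lemma svd_left:
  assumes G: "(G :: real mat) \<in> carrier_mat m n" and svd: "is_svd G U S V" and r: "r \<le> min m n"
  shows "real r / real (min m n) * frob G G
         \<le> frob (first_cols r U * (transpose_mat (first_cols r U) * G)) G"
proof -
  define P where "P = first_cols r U"
  from svd G have U: "U \<in> carrier_mat m m" and V: "V \<in> carrier_mat n n" and S: "S \<in> carrier_mat m n"
    and OU: "transpose_mat U * U = 1\<^sub>m m" and OV: "transpose_mat V * V = 1\<^sub>m n"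
    and off: "\<forall>i<m. \<forall>j<n. i \<noteq> j \<longrightarrow> S $$ (i,j) = 0"
    and nn: "\<forall>i<min m n. 0 \<le> S $$ (i,i)"
    and srt: "\<forall>i j. i \<le> j \<longrightarrow> j < min m n \<longrightarrow> S $$ (j,j) \<le> S $$ (i,i)"
    and Geq: "G = U * S * transpose_mat V"
    unfolding is_svd_def Let_def by auto
  have P: "P \<in> carrier_mat m r" unfolding P_def using U by (rule first_cols_carrier)
  define Z where "Z = transpose_mat P * U * S"
  have Z: "Z \<in> carrier_mat r n" unfolding Z_def using P U S by auto
  have PG: "transpose_mat P * G = Z * transpose_mat V"
  proof -
    have "transpose_mat P * G = transpose_mat P * (U * S * transpose_mat V)" using Geq by simp
    also have "\<dots> = transpose_mat P * (U * S) * transpose_mat V"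
      using P U S V by (intro assoc_mult_mat[symmetric]) auto
    also have "transpose_mat P * (U * S) = transpose_mat P * U * S"
      using P U S by (intro assoc_mult_mat[symmetric]) auto
    finally show ?thesis unfolding Z_def .
  qed
  have PUeq: "transpose_mat P * U = mat r m (\<lambda>(i,k). if i = k then 1 else 0)"
  proof (rule eq_matI)
    fix i k assume "i < dim_row (mat r m (\<lambda>(i,k). if i = k then (1::real) else 0))"
      "k < dim_col (mat r m (\<lambda>(i,k). if i = k then (1::real) else 0))"
    then have "i < r" "k < m" by auto
    then show "(transpose_mat P * U) $$ (i, k) = mat r m (\<lambda>(i,k). if i = k then 1 else 0) $$ (i, k)"
      using PtU[OF U OU _ \<open>i < r\<close> \<open>k < m\<close>] r unfolding P_def by simp
  qed (use P U in auto)
  have Zent: "Z $$ (i,j) = S $$ (i,j)" if "i < r" "j < n" for i j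
  proof -
    have "Z $$ (i,j) = (\<Sum>k<m. (if i = k then 1 else 0) * S $$ (k,j))"
      unfolding Z_def PUeq using that S by (simp add: scalar_prod_def atLeast0LessThan)
    also have "\<dots> = (\<Sum>k<m. if i = k then S $$ (k,j) else 0)" by (intro sum.cong) auto
    also have "\<dots> = S $$ (i,j)" using that r by (simp add: sum.delta)
    finally show ?thesis .
  qed
  have "frob (P * (transpose_mat P * G)) G = frob (transpose_mat P * G) (transpose_mat P * G)"
    using P G by (intro frob_adj) auto
  also have "\<dots> = frob Z Z" unfolding PG using V OV Z by (rule orth_right)
  also have "\<dots> = (\<Sum>i<r. \<Sum>j<n. S $$ (i,j) * S $$ (i,j))"
    using Z Zent unfolding frob_def by auto
  also have "\<dots> = (\<Sum>i<r. (S $$ (i,i))\<^sup>2)"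
    using diag_rows[OF S off, of r] r by (simp add: min_absorb1)
  finally have A: "frob (P * (transpose_mat P * G)) G = (\<Sum>i<r. (S $$ (i,i))\<^sup>2)" .
  have "frob G G = frob (U * (S * transpose_mat V)) (U * (S * transpose_mat V))"
    using Geq U S V by (simp add: assoc_mult_mat[of U m m S n "transpose_mat V" n])
  also have "\<dots> = frob (S * transpose_mat V) (S * transpose_mat V)"
    using U OU S V by (intro orth_left) auto
  also have "\<dots> = frob S S" using V OV S by (rule orth_right)
  also have "\<dots> = (\<Sum>i<min m n. (S $$ (i,i))\<^sup>2)"
    using diag_rows[OF S off, of m] S unfolding frob_def by auto
  finally have B: "frob G G = (\<Sum>i<min m n. (S $$ (i,i))\<^sup>2)" .
  have "real r * frob G G \<le> real (min m n) * (\<Sum>i<r. (S $$ (i,i))\<^sup>2)"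
    unfolding B
  proof (rule avg_sorted[OF _ r])
    fix i j assume "i \<le> j" "j < min m n"
    then show "(S $$ (j,j))\<^sup>2 \<le> (S $$ (i,i))\<^sup>2"
      using srt nn by (intro power_mono) auto
  qed
  note h = this
  show ?thesis
  proof (cases "min m n = 0")
    case True then show ?thesis using A r unfolding P_def by simp
  next
    case False
    show ?thesis using h False A unfolding P_def by (simp add: field_simps)
  qed
qed



lemma is_svd_transpose:
  assumes G: "(G :: real mat) \<in> carrier_mat m n" and svd: "is_svd G U S V"
  shows "is_svd (transpose_mat G) V (transpose_mat S) U"
proof -
  from svd G have U: "U \<in> carrier_mat m m" and V: "V \<in> carrier_mat n n" and S: "S \<in> carrier_mat m n"
    and OU: "transpose_mat U * U = 1\<^sub>m m" and OV: "transpose_mat V * V = 1\<^sub>m n"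
    and off: "\<forall>i<m. \<forall>j<n. i \<noteq> j \<longrightarrow> S $$ (i,j) = 0"
    and nn: "\<forall>i<min m n. 0 \<le> S $$ (i,i)"
    and srt: "\<forall>i j. i \<le> j \<longrightarrow> j < min m n \<longrightarrow> S $$ (j,j) \<le> S $$ (i,i)"
    and Geq: "G = U * S * transpose_mat V"
    unfolding is_svd_def Let_def by auto
  have "transpose_mat G = transpose_mat (U * S * transpose_mat V)" using Geq by simp
  also have "\<dots> = transpose_mat (transpose_mat V) * transpose_mat (U * S)"
    using U S V by (intro transpose_mult) auto
  also have "transpose_mat (U * S) = transpose_mat S * transpose_mat U"
    using U S by (intro transpose_mult) auto
  finally have Gt: "transpose_mat G = V * transpose_mat S * transpose_mat U"
    using U S V by (simp add: assoc_mult_mat[of V n n "transpose_mat S" m "transpose_mat U" m])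
  show ?thesis
    unfolding is_svd_def Let_def using G U V S OU OV off nn srt Gt
    by (auto simp: min.commute)
qed

lemma svd_right:
  assumes G: "(G :: real mat) \<in> carrier_mat m n" and svd: "is_svd G U S V" and r: "r \<le> min m n"
  shows "real r / real (min m n) * frob G G
         \<le> frob (G * first_cols r V * transpose_mat (first_cols r V)) G"
proof -
  define Q where "Q = first_cols r V"
  have V: "V \<in> carrier_mat n n" using svd G unfolding is_svd_def Let_def by auto
  have Q: "Q \<in> carrier_mat n r" unfolding Q_def using V by (rule first_cols_carrier)
  have Gt: "transpose_mat G \<in> carrier_mat n m" using G by simp
  have L: "real r / real (min n m) * frob (transpose_mat G) (transpose_mat G)
     \<le> frob (Q * (transpose_mat Q * transpose_mat G)) (transpose_mat G)"
    using svd_left[OF Gt is_svd_transpose[OF G svd], of r] r unfolding Q_def by (simp add: min.commute)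
  have e1: "frob (transpose_mat G) (transpose_mat G) = frob G G"
    using G by (intro frob_tr[symmetric]) auto
  have e2: "transpose_mat (G * Q * transpose_mat Q) = Q * (transpose_mat Q * transpose_mat G)"
  proof -
    have "transpose_mat (G * Q * transpose_mat Q) = transpose_mat (transpose_mat Q) * transpose_mat (G * Q)"
      using G Q by (intro transpose_mult) auto
    also have "transpose_mat (G * Q) = transpose_mat Q * transpose_mat G"
      using G Q by (intro transpose_mult) auto
    finally show ?thesis by simp
  qed
  have e3: "frob (G * Q * transpose_mat Q) G = frob (Q * (transpose_mat Q * transpose_mat G)) (transpose_mat G)"
    using frob_tr[of "G * Q * transpose_mat Q" m n G] G Q e2 by auto
  show ?thesis using L e1 e3 unfolding Q_def by (simp add: min.commute)
qed

lemma sum_sigma_eta: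
  assumes "finite A" "\<And>x. x \<in> A \<Longrightarrow> finite (B x)"
  shows "(\<Sum>x\<in>A. \<Sum>y\<in>B x. F (x,y)) = (\<Sum>p\<in>Sigma A B. F p)"
  using sum.Sigma[of A B "\<lambda>x y. F (x,y)"] assms by (simp add: case_prod_eta)

locale stk =
  fixes NL :: nat and m n :: "nat \<Rightarrow> nat" and ix :: "nat \<Rightarrow> nat \<Rightarrow> nat \<Rightarrow> 'd::finite"
  assumes stack: "bij_betw (\<lambda>(l,i,j). ix l i j) {(l,i,j). l < NL \<and> i < m l \<and> j < n l} UNIV"
begin

abbreviation "SS \<equiv> {(l,i,j). l < NL \<and> i < m l \<and> j < n l}"
abbreviation "ixp \<equiv> (\<lambda>(l,i,j). ix l i j)"

definition "iv k = the_inv_into SS ixp k"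

definition vec_of :: "(nat \<Rightarrow> real mat) \<Rightarrow> real^'d" where
  "vec_of W = (\<chi> k. case iv k of (l,i,j) \<Rightarrow> W l $$ (i,j))"

abbreviation "blk l v \<equiv> block ix (m l) (n l) l v"

lemma inj: "inj_on ixp SS" using stack by (simp add: bij_betw_def)

lemma iv_ix: "l < NL \<Longrightarrow> i < m l \<Longrightarrow> j < n l \<Longrightarrow> iv (ix l i j) = (l,i,j)"
  unfolding iv_def using the_inv_into_f_f[OF inj, of "(l,i,j)"] by simp

lemma iv_in: "iv k \<in> SS"
  unfolding iv_def using stack by (intro the_inv_into_into) (auto simp: bij_betw_def)

lemma ix_iv: "ixp (iv k) = k"
  unfolding iv_def using stack by (intro f_the_inv_into_f) (auto simp: bij_betw_def)

lemma blk_carrier: "blk l v \<in> carrier_mat (m l) (n l)"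
  unfolding block_def by simp

lemma blk_entry: "i < m l \<Longrightarrow> j < n l \<Longrightarrow> blk l v $$ (i,j) = vec_nth v (ix l i j)"
  unfolding block_def by simp

lemma blk_vec_of: "l < NL \<Longrightarrow> W l \<in> carrier_mat (m l) (n l) \<Longrightarrow> blk l (vec_of W) = W l"
  by (rule eq_matI) (auto simp: block_def vec_of_def iv_ix)

lemma vec_eq: assumes "\<And>l. l < NL \<Longrightarrow> blk l u = blk l v" shows "u = v"
proof -
  have "vec_nth u k = vec_nth v k" for k
  proof -
    obtain l i j where lij: "iv k = (l,i,j)" by (cases "iv k") auto
    then have in1: "l < NL" "i < m l" "j < n l" using iv_in[of k] by auto
    have k: "k = ix l i j" using ix_iv[of k] lij by simp
    have "vec_nth u (ix l i j) = blk l u $$ (i,j)" using in1 by (simp add: blk_entry)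
    also have "\<dots> = blk l v $$ (i,j)" using assms in1 by simp
    also have "\<dots> = vec_nth v (ix l i j)" using in1 by (simp add: blk_entry)
    finally show "vec_nth u k = vec_nth v k" using k by simp
  qed
  then show ?thesis using Finite_Cartesian_Product.vec_eq_iff[of u v] by blast
qed

lemma vec_of_cong: assumes "\<And>l. l < NL \<Longrightarrow> W l = W' l" shows "vec_of W = vec_of W'"
proof -
  have "(case iv k of (l,i,j) \<Rightarrow> W l $$ (i,j)) = (case iv k of (l,i,j) \<Rightarrow> W' l $$ (i,j))" for k
    using iv_in[of k] assms by (cases "iv k") auto
  then show ?thesis unfolding vec_of_def by simp
qed

lemma inner_blk: "inner u v = (\<Sum>l<NL. frob (blk l u) (blk l v))"
proof -
  have "inner u v = (\<Sum>k\<in>UNIV. vec_nth u k * vec_nth v k)" by (simp add: inner_vec_def)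
  also have "\<dots> = (\<Sum>p\<in>SS. vec_nth u (ixp p) * vec_nth v (ixp p))"
    using sum.reindex_bij_betw[OF stack, of "\<lambda>k. vec_nth u k * vec_nth v k"] by simp
  also have "SS = Sigma {..<NL} (\<lambda>l. Sigma {..<m l} (\<lambda>i. {..<n l}))" by auto
  also have "(\<Sum>p\<in>Sigma {..<NL} (\<lambda>l. Sigma {..<m l} (\<lambda>i. {..<n l})). vec_nth u (ixp p) * vec_nth v (ixp p))
      = (\<Sum>l<NL. \<Sum>q\<in>Sigma {..<m l} (\<lambda>i. {..<n l}). vec_nth u (ixp (l,q)) * vec_nth v (ixp (l,q)))"
    by (rule sum_sigma_eta[symmetric]) auto
  also have "\<dots> = (\<Sum>l<NL. \<Sum>i<m l. \<Sum>j<n l. vec_nth u (ix l i j) * vec_nth v (ix l i j))"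
  proof (intro sum.cong refl)
    fix l
    show "(\<Sum>q\<in>Sigma {..<m l} (\<lambda>i. {..<n l}). vec_nth u (ixp (l,q)) * vec_nth v (ixp (l,q)))
       = (\<Sum>i<m l. \<Sum>j<n l. vec_nth u (ix l i j) * vec_nth v (ix l i j))"
      using sum_sigma_eta[of "{..<m l}" "\<lambda>i. {..<n l}" "\<lambda>q. vec_nth u (ixp (l,q)) * vec_nth v (ixp (l,q))"]
      by simp
  qed
  also have "\<dots> = (\<Sum>l<NL. frob (blk l u) (blk l v))"
    unfolding frob_def block_def by simp
  finally show ?thesis .
qed

lemma blk_lin: "blk l (a *\<^sub>R u + b *\<^sub>R v) = a \<cdot>\<^sub>m blk l u + b \<cdot>\<^sub>m blk l v"
  by (rule eq_matI) (auto simp: block_def)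

lemma blk_diff: "blk l (u - c *\<^sub>R v) = blk l u - c \<cdot>\<^sub>m blk l v"
  by (rule eq_matI) (auto simp: block_def)

lemma blk_scale: "blk l (c *\<^sub>R v) = c \<cdot>\<^sub>m blk l v"
  by (rule eq_matI) (auto simp: block_def)

end

theorem theoremB2:
  fixes NL :: nat and m n r :: "nat \<Rightarrow> nat"
    and ix :: "nat \<Rightarrow> nat \<Rightarrow> nat \<Rightarrow> 'd::finite"
    and f :: "real^'d \<Rightarrow> real" and grad :: "real^'d \<Rightarrow> real^'d"
    and L \<beta>1 \<eta> :: real and \<tau> K :: nat
    and x :: "nat \<Rightarrow> real^'d"
    and P Q M G :: "nat \<Rightarrow> nat \<Rightarrow> real mat"
    and \<delta> \<Delta> :: real
  assumes stack: "bij_betw (\<lambda>(l,i,j). ix l i j) {(l,i,j). l < NL \<and> i < m l \<and> j < n l} UNIV"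
    and grad: "\<And>y. (f has_derivative (\<lambda>h. grad y \<bullet> h)) (at y)"
    and A1: "bdd_below (range f)"
    and A2: "\<And>y z. norm (grad y - grad z) \<le> L * norm (y - z)"
    and rank: "\<And>l. l < NL \<Longrightarrow> r l < min (m l) (n l)"
    and G_def: "\<And>t l. G t l = block ix (m l) (n l) l (grad (x t))"
    and \<delta>_def: "\<delta> = Min ((\<lambda>l. real (r l) / real (min (m l) (n l))) ` {..<NL})"
    and \<Delta>_def: "\<Delta> = f (x 0) - (INF y. f y)"
    and proj_svd: "\<And>t l. l < NL \<Longrightarrow> t mod \<tau> = 0 \<Longrightarrow>
         \<exists>U S V. is_svd (G t l) U S V \<and> P t l = first_cols (r l) U \<and> Q t l = first_cols (r l) V"
    and proj_keep: "\<And>t l. l < NL \<Longrightarrow> t mod \<tau> \<noteq> 0 \<Longrightarrow>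
         P t l = P (t - 1) l \<and> Q t l = Q (t - 1) l"
    and mom0_le: "\<And>l. l < NL \<Longrightarrow> m l \<le> n l \<Longrightarrow>
         M 0 l = \<beta>1 \<cdot>\<^sub>m (transpose_mat (P 0 l) * G 0 l)"
    and mom_le: "\<And>t l. l < NL \<Longrightarrow> m l \<le> n l \<Longrightarrow>
         M (Suc t) l = (1 - \<beta>1) \<cdot>\<^sub>m (transpose_mat (P (Suc t) l) * P t l * M t l)
                       + \<beta>1 \<cdot>\<^sub>m (transpose_mat (P (Suc t) l) * G (Suc t) l)"
    and step_le: "\<And>t l. l < NL \<Longrightarrow> m l \<le> n l \<Longrightarrow>
         block ix (m l) (n l) l (x (Suc t)) = block ix (m l) (n l) l (x t) - \<eta> \<cdot>\<^sub>m (P t l * M t l)"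
    and mom0_gt: "\<And>l. l < NL \<Longrightarrow> m l > n l \<Longrightarrow>
         M 0 l = \<beta>1 \<cdot>\<^sub>m (G 0 l * Q 0 l)"
    and mom_gt: "\<And>t l. l < NL \<Longrightarrow> m l > n l \<Longrightarrow>
         M (Suc t) l = (1 - \<beta>1) \<cdot>\<^sub>m (M t l * transpose_mat (Q t l) * Q (Suc t) l)
                       + \<beta>1 \<cdot>\<^sub>m (G (Suc t) l * Q (Suc t) l)"
    and step_gt: "\<And>t l. l < NL \<Longrightarrow> m l > n l \<Longrightarrow>
         block ix (m l) (n l) l (x (Suc t)) = block ix (m l) (n l) l (x t) - \<eta> \<cdot>\<^sub>m (M t l * transpose_mat (Q t l))"
    and \<beta>1: "0 < \<beta>1" "\<beta>1 \<le> 1"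
    and \<tau>: "\<tau> \<ge> 1" "real \<tau> \<ge> 64 / (3 * \<beta>1 * \<delta>)"
    and \<eta>: "0 < \<eta>"
      "\<eta> \<le> Min {1 / (4 * L), sqrt (3 * \<delta> * \<beta>1^2 / (80 * L^2)),
                 sqrt (3 * \<delta> / (80 * real \<tau>^2 * L^2)), sqrt (3 * \<beta>1 / (16 * real \<tau> * L^2))}"
    and K: "K \<ge> 1"
  shows "(1 / real (K * \<tau>)) * (\<Sum>t<K * \<tau>. (norm (grad (x t)))^2)
           \<le> 16 * \<Delta> / (\<delta> * \<eta> * real (K * \<tau>))"

proof -
  interpret stk NL m n ix using stack by unfold_locales
  have tpos: "0 < real \<tau>" using \<tau> by simp
  obtain k0 :: 'd where True by simp
  obtain l0 i0 j0 where l0: "iv k0 = (l0,i0,j0)" by (cases "iv k0") auto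
  have NLpos: "0 < NL" using iv_in[of k0] l0 by auto
  have etas: "\<eta> \<le> 1 / (4 * L) \<and> \<eta> \<le> sqrt (3 * \<delta> * \<beta>1^2 / (80 * L^2)) \<and>
      \<eta> \<le> sqrt (3 * \<delta> / (80 * real \<tau>^2 * L^2))"
    using \<eta>(2) by simp
  have e1: "\<eta> \<le> 1 / (4 * L)" using etas by blast
  have e2: "\<eta> \<le> sqrt (3 * \<delta> * \<beta>1^2 / (80 * L^2))" using etas by blast
  have e3: "\<eta> \<le> sqrt (3 * \<delta> / (80 * real \<tau>^2 * L^2))" using etas by blast
  have sq: "\<eta>\<^sup>2 \<le> y" if "\<eta> \<le> sqrt y" for y
  proof -
    have "0 < sqrt y" using that \<eta>(1) by linarith
    then have y: "0 < y" by simp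
    have "\<eta>\<^sup>2 \<le> (sqrt y)\<^sup>2" using that \<eta>(1) by (intro power_mono) auto
    then show ?thesis using y by simp
  qed
  have Lpos: "0 < L"
  proof (rule ccontr)
    assume "\<not> 0 < L"
    then have "1 / (4 * L) \<le> 0" by (simp add: divide_nonpos_nonneg)
    then show False using e1 \<eta>(1) by linarith
  qed
  have c1: "L * \<eta> \<le> 1/4"
  proof -
    have "L * \<eta> \<le> L * (1 / (4 * L))" using e1 Lpos by (intro mult_left_mono) auto
    then show ?thesis using Lpos by simp
  qed
  have s2: "\<eta>\<^sup>2 \<le> 3 * \<delta> * \<beta>1^2 / (80 * L^2)" using sq e2 by blast
  have s3: "\<eta>\<^sup>2 \<le> 3 * \<delta> / (80 * real \<tau>^2 * L^2)" using sq e3 by blast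
  have dpos: "0 < \<delta>"
  proof -
    have "0 < \<eta>\<^sup>2" using \<eta>(1) by simp
    then have "0 < 3 * \<delta> * \<beta>1^2 / (80 * L^2)" using s2 by linarith
    then show ?thesis using Lpos \<beta>1 by (simp add: zero_less_divide_iff zero_less_mult_iff)
  qed
  have c2: "L\<^sup>2 * \<eta>\<^sup>2 \<le> 3 * \<delta> * \<beta>1\<^sup>2 / 80"
  proof -
    have "L\<^sup>2 * \<eta>\<^sup>2 \<le> L\<^sup>2 * (3 * \<delta> * \<beta>1^2 / (80 * L^2))" using s2 by (intro mult_left_mono) auto
    then show ?thesis using Lpos by simp
  qed
  have c3: "L\<^sup>2 * \<eta>\<^sup>2 * (real \<tau>)\<^sup>2 \<le> 3 * \<delta> / 80"
  proof -
    have "(L\<^sup>2 * (real \<tau>)\<^sup>2) * \<eta>\<^sup>2 \<le> (L\<^sup>2 * (real \<tau>)\<^sup>2) * (3 * \<delta> / (80 * real \<tau>^2 * L^2))"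
      using s3 by (intro mult_left_mono) auto
    then show ?thesis using Lpos tpos by (simp add: mult_ac)
  qed
  have c4: "64/3 \<le> real \<tau> * \<beta>1 * \<delta>"
  proof -
    have "64 / (3 * \<beta>1 * \<delta>) * (\<beta>1 * \<delta>) \<le> real \<tau> * (\<beta>1 * \<delta>)"
      using \<tau>(2) \<beta>1 dpos by (intro mult_right_mono) auto
    then show ?thesis using \<beta>1 dpos by (simp add: mult_ac)
  qed
  have dl: "\<delta> \<le> real (r l) / real (min (m l) (n l))" if "l < NL" for l
    unfolding \<delta>_def using that by (intro Min_le) auto
  have d1: "\<delta> \<le> 1"
  proof -
    have "real (r 0) / real (min (m 0) (n 0)) \<le> 1" using rank[OF NLpos] by simp
    then show ?thesis using dl[OF NLpos] by linarith
  qed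
  have Gcar: "G t l \<in> carrier_mat (m l) (n l)" for t l unfolding G_def by (rule blk_carrier)
  have PQ: "P t l \<in> carrier_mat (m l) (r l) \<and> transpose_mat (P t l) * P t l = 1\<^sub>m (r l) \<and>
            Q t l \<in> carrier_mat (n l) (r l) \<and> transpose_mat (Q t l) * Q t l = 1\<^sub>m (r l)"
    if l: "l < NL" for t l
  proof (induction t rule: less_induct)
    case (less t)
    show ?case
    proof (cases "t mod \<tau> = 0")
      case True
      obtain U S V where svd: "is_svd (G t l) U S V" and Pe: "P t l = first_cols (r l) U"
        and Qe: "Q t l = first_cols (r l) V" using proj_svd[OF l True] by blast
      from svd Gcar[of t l] have U: "U \<in> carrier_mat (m l) (m l)" and V: "V \<in> carrier_mat (n l) (n l)"
        and OU: "transpose_mat U * U = 1\<^sub>m (m l)" and OV: "transpose_mat V * V = 1\<^sub>m (n l)"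
        unfolding is_svd_def Let_def by auto
      have rl: "r l \<le> m l" "r l \<le> n l" using rank[OF l] by auto
      show ?thesis unfolding Pe Qe
        using first_cols_carrier[OF U] first_cols_carrier[OF V]
          first_cols_orth[OF U OU rl(1)] first_cols_orth[OF V OV rl(2)] by auto
    next
      case False
      then have t0: "0 < t" by (cases t) auto
      have "P t l = P (t - 1) l \<and> Q t l = Q (t - 1) l" using proj_keep[OF l False] .
      then show ?thesis using less.IH[of "t - 1"] t0 by simp
    qed
  qed
  define Pl where "Pl t l X = (if m l \<le> n l then P t l * (transpose_mat (P t l) * X)
                               else X * Q t l * transpose_mat (Q t l))" for t l X
  define Pi where "Pi t v = vec_of (\<lambda>l. Pl t l (blk l v))" for t v
  define W where "W t l = (if m l \<le> n l then P t l * M t l else M t l * transpose_mat (Q t l))" for t l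
  define Nv where "Nv t = vec_of (W t)" for t
  have Mcar: "(m l \<le> n l \<longrightarrow> M t l \<in> carrier_mat (r l) (n l)) \<and>
              (\<not> m l \<le> n l \<longrightarrow> M t l \<in> carrier_mat (m l) (r l))" if l: "l < NL" for t l
  proof (induction t)
    case 0
    show ?case using mom0_le[OF l] mom0_gt[OF l] PQ[OF l, of 0] Gcar[of 0 l] by auto
  next
    case (Suc t)
    show ?case using mom_le[OF l, of t] mom_gt[OF l, of t] PQ[OF l, of t] PQ[OF l, of "Suc t"]
        Gcar[of "Suc t" l] Suc by auto
  qed
  have Plcar: "Pl t l X \<in> carrier_mat (m l) (n l)" if "l < NL" "X \<in> carrier_mat (m l) (n l)" for t l X
    using PQ[OF that(1), of t] that(2) unfolding Pl_def by auto
  have Wcar: "W t l \<in> carrier_mat (m l) (n l)" if "l < NL" for t l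
    using PQ[OF that, of t] Mcar[OF that, of t] unfolding W_def by auto
  have blkPi: "blk l (Pi t v) = Pl t l (blk l v)" if "l < NL" for t l v
    unfolding Pi_def using that Plcar[OF that blk_carrier] by (intro blk_vec_of) auto
  have blkN: "blk l (Nv t) = W t l" if "l < NL" for t l
    unfolding Nv_def using that Wcar[OF that] by (intro blk_vec_of) auto
  have Pl_adj: "frob (Pl t l X) Y = frob X (Pl t l Y)"
    if "l < NL" "X \<in> carrier_mat (m l) (n l)" "Y \<in> carrier_mat (m l) (n l)" for t l X Y
    using PQ[OF that(1), of t] that lp_adj[of "P t l" "m l" "r l" X "n l" Y] rp_adj[of "Q t l" "n l" "r l" X "m l" Y]
    unfolding Pl_def by auto
  have Pl_idem: "Pl t l (Pl t l X) = Pl t l X" if "l < NL" "X \<in> carrier_mat (m l) (n l)" for t l X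
    using PQ[OF that(1), of t] that lp_idem[of "P t l" "m l" "r l" X "n l"] rp_idem[of "Q t l" "n l" "r l" X "m l"]
    unfolding Pl_def by auto
  have Pl_lin: "Pl t l (a \<cdot>\<^sub>m X + b \<cdot>\<^sub>m Y) = a \<cdot>\<^sub>m Pl t l X + b \<cdot>\<^sub>m Pl t l Y"
    if "l < NL" "X \<in> carrier_mat (m l) (n l)" "Y \<in> carrier_mat (m l) (n l)" for t l X Y a b
    using PQ[OF that(1), of t] that lp_lin[of "P t l" "m l" "r l" X "n l" Y] rp_lin[of "Q t l" "n l" "r l" X "m l" Y]
    unfolding Pl_def by auto
  have adj: "inner (Pi t u) v = inner u (Pi t v)" for t u v
    unfolding inner_blk by (intro sum.cong refl) (simp add: blkPi Pl_adj blk_carrier)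
  have idem: "Pi t (Pi t v) = Pi t v" for t v
    by (rule vec_eq) (simp add: blkPi Pl_idem blk_carrier Plcar)
  have lin: "Pi t (a *\<^sub>R u + b *\<^sub>R v) = a *\<^sub>R Pi t u + b *\<^sub>R Pi t v" for t a b u v
    by (rule vec_eq) (simp add: blkPi blk_lin Pl_lin blk_carrier)
  have keep: "Pi (Suc t) = Pi t" if "Suc t mod \<tau> \<noteq> 0" for t
  proof
    fix v
    have "Pl (Suc t) l (blk l v) = Pl t l (blk l v)" if "l < NL" for l
      using proj_keep[OF that \<open>Suc t mod \<tau> \<noteq> 0\<close>] unfolding Pl_def by simp
    then show "Pi (Suc t) v = Pi t v" unfolding Pi_def by (rule vec_of_cong)
  qed
  have svd: "\<delta> * (norm (grad (x t)))\<^sup>2 \<le> (norm (Pi t (grad (x t))))\<^sup>2" if t: "t mod \<tau> = 0" for t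
  proof -
    have "(norm (Pi t (grad (x t))))\<^sup>2 = inner (Pi t (grad (x t))) (Pi t (grad (x t)))"
      by (simp add: power2_norm_eq_inner)
    also have "\<dots> = inner (Pi t (Pi t (grad (x t)))) (grad (x t))" by (simp add: adj)
    also have "\<dots> = (\<Sum>l<NL. frob (Pl t l (G t l)) (G t l))"
      unfolding idem inner_blk by (simp add: blkPi G_def)
    finally have A: "(norm (Pi t (grad (x t))))\<^sup>2 = (\<Sum>l<NL. frob (Pl t l (G t l)) (G t l))" .
    have B: "(norm (grad (x t)))\<^sup>2 = (\<Sum>l<NL. frob (G t l) (G t l))"
      by (simp add: power2_norm_eq_inner inner_blk G_def)
    have each: "\<delta> * frob (G t l) (G t l) \<le> frob (Pl t l (G t l)) (G t l)" if l: "l < NL" for l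
    proof -
      obtain U S V where svd: "is_svd (G t l) U S V" and Pe: "P t l = first_cols (r l) U"
        and Qe: "Q t l = first_cols (r l) V" using proj_svd[OF l t] by blast
      have rl: "r l \<le> min (m l) (n l)" using rank[OF l] by simp
      have "\<delta> * frob (G t l) (G t l) \<le> real (r l) / real (min (m l) (n l)) * frob (G t l) (G t l)"
        using dl[OF l] frob_nonneg by (intro mult_right_mono) auto
      also have "\<dots> \<le> frob (Pl t l (G t l)) (G t l)"
        using svd_left[OF Gcar svd rl] svd_right[OF Gcar svd rl] unfolding Pl_def Pe Qe by auto
      finally show ?thesis .
    qed
    have "\<delta> * (norm (grad (x t)))\<^sup>2 = (\<Sum>l<NL. \<delta> * frob (G t l) (G t l))"
      unfolding B by (simp add: sum_distrib_left)
    also have "\<dots> \<le> (\<Sum>l<NL. frob (Pl t l (G t l)) (G t l))" by (intro sum_mono each) auto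
    finally show ?thesis unfolding A .
  qed
  have N0: "Nv 0 = Pi 0 (\<beta>1 *\<^sub>R grad (x 0))"
    unfolding Nv_def Pi_def
  proof (rule vec_of_cong)
    fix l assume l: "l < NL"
    have b: "blk l (\<beta>1 *\<^sub>R grad (x 0)) = \<beta>1 \<cdot>\<^sub>m G 0 l" by (simp add: blk_scale G_def)
    note PQl = PQ[OF l, of 0] and G0 = Gcar[of 0 l]
    show "W 0 l = Pl 0 l (blk l (\<beta>1 *\<^sub>R grad (x 0)))"
    proof (cases "m l \<le> n l")
      case True
      have "P 0 l * M 0 l = \<beta>1 \<cdot>\<^sub>m (P 0 l * (transpose_mat (P 0 l) * G 0 l))"
        unfolding mom0_le[OF l True] using PQl G0 by (intro mult_smult_distrib) auto
      moreover have "P 0 l * (transpose_mat (P 0 l) * (\<beta>1 \<cdot>\<^sub>m G 0 l)) = \<beta>1 \<cdot>\<^sub>m (P 0 l * (transpose_mat (P 0 l) * G 0 l))"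
        using PQl G0 mult_smult_distrib[of "transpose_mat (P 0 l)" "r l" "m l" "G 0 l" "n l" \<beta>1]
          mult_smult_distrib[of "P 0 l" "m l" "r l" "transpose_mat (P 0 l) * G 0 l" "n l" \<beta>1] by auto
      ultimately show ?thesis unfolding W_def Pl_def b using True by simp
    next
      case False
      have GQ: "G 0 l * Q 0 l \<in> carrier_mat (m l) (r l)" and QT: "transpose_mat (Q 0 l) \<in> carrier_mat (r l) (n l)"
        using PQl G0 by auto
      have "M 0 l * transpose_mat (Q 0 l) = \<beta>1 \<cdot>\<^sub>m (G 0 l * Q 0 l * transpose_mat (Q 0 l))"
      proof -
        have "M 0 l = \<beta>1 \<cdot>\<^sub>m (G 0 l * Q 0 l)" using mom0_gt[OF l] False by simp
        then show ?thesis using mult_smult_assoc_mat[OF GQ QT] by simp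
      qed
      moreover have "(\<beta>1 \<cdot>\<^sub>m G 0 l) * Q 0 l * transpose_mat (Q 0 l) = \<beta>1 \<cdot>\<^sub>m (G 0 l * Q 0 l * transpose_mat (Q 0 l))"
      proof -
        have Qc: "Q 0 l \<in> carrier_mat (n l) (r l)" using PQl by simp
        show ?thesis using mult_smult_assoc_mat[OF G0 Qc] mult_smult_assoc_mat[OF GQ QT] by simp
      qed
      ultimately show ?thesis unfolding W_def Pl_def b using False by simp
    qed
  qed
  have Nsuc: "Nv (Suc t) = Pi (Suc t) ((1 - \<beta>1) *\<^sub>R Nv t + \<beta>1 *\<^sub>R grad (x (Suc t)))" for t
    unfolding Nv_def[of "Suc t"] Pi_def
  proof (rule vec_of_cong)
    fix l assume l: "l < NL"
    have b: "blk l ((1 - \<beta>1) *\<^sub>R Nv t + \<beta>1 *\<^sub>R grad (x (Suc t))) = (1 - \<beta>1) \<cdot>\<^sub>m W t l + \<beta>1 \<cdot>\<^sub>m G (Suc t) l"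
      by (simp add: blk_lin blkN[OF l] G_def)
    note P0 = PQ[OF l, of t] and P1 = PQ[OF l, of "Suc t"] and G1 = Gcar[of "Suc t" l] and Mt = Mcar[OF l, of t]
    show "W (Suc t) l = Pl (Suc t) l (blk l ((1 - \<beta>1) *\<^sub>R Nv t + \<beta>1 *\<^sub>R grad (x (Suc t))))"
    proof (cases "m l \<le> n l")
      case True
      define A where "A = transpose_mat (P (Suc t) l) * P t l * M t l"
      define B where "B = transpose_mat (P (Suc t) l) * G (Suc t) l"
      have A: "A \<in> carrier_mat (r l) (n l)" and B: "B \<in> carrier_mat (r l) (n l)"
        unfolding A_def B_def using P0 P1 G1 Mt True by auto
      have "P (Suc t) l * M (Suc t) l = P (Suc t) l * ((1 - \<beta>1) \<cdot>\<^sub>m A + \<beta>1 \<cdot>\<^sub>m B)"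
        unfolding mom_le[OF l True] A_def B_def ..
      also have "\<dots> = (1 - \<beta>1) \<cdot>\<^sub>m (P (Suc t) l * A) + \<beta>1 \<cdot>\<^sub>m (P (Suc t) l * B)"
      proof -
        have "P (Suc t) l * ((1 - \<beta>1) \<cdot>\<^sub>m A + \<beta>1 \<cdot>\<^sub>m B) = P (Suc t) l * ((1 - \<beta>1) \<cdot>\<^sub>m A) + P (Suc t) l * (\<beta>1 \<cdot>\<^sub>m B)"
          using P1 A B by (intro mult_add_distrib_mat[of _ "m l" "r l" _ "n l"]) auto
        then show ?thesis using P1 A B mult_smult_distrib[of "P (Suc t) l" "m l" "r l" A "n l"]
            mult_smult_distrib[of "P (Suc t) l" "m l" "r l" B "n l"] by auto
      qed
      also have "A = transpose_mat (P (Suc t) l) * (P t l * M t l)"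
        unfolding A_def using P0 P1 Mt True by (intro assoc_mult_mat) auto
      finally have L: "W (Suc t) l = (1 - \<beta>1) \<cdot>\<^sub>m (P (Suc t) l * (transpose_mat (P (Suc t) l) * W t l))
          + \<beta>1 \<cdot>\<^sub>m (P (Suc t) l * (transpose_mat (P (Suc t) l) * G (Suc t) l))"
        unfolding W_def B_def using True by simp
      have "Pl (Suc t) l ((1 - \<beta>1) \<cdot>\<^sub>m W t l + \<beta>1 \<cdot>\<^sub>m G (Suc t) l)
          = (1 - \<beta>1) \<cdot>\<^sub>m Pl (Suc t) l (W t l) + \<beta>1 \<cdot>\<^sub>m Pl (Suc t) l (G (Suc t) l)"
        using Pl_lin[OF l Wcar[OF l] G1] .
      then show ?thesis unfolding b L using True unfolding Pl_def by simp
    next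
      case False
      define A where "A = M t l * transpose_mat (Q t l) * Q (Suc t) l"
      define B where "B = G (Suc t) l * Q (Suc t) l"
      have A: "A \<in> carrier_mat (m l) (r l)" and B: "B \<in> carrier_mat (m l) (r l)"
        unfolding A_def B_def using P0 P1 G1 Mt False by auto
      have "M (Suc t) l * transpose_mat (Q (Suc t) l) = ((1 - \<beta>1) \<cdot>\<^sub>m A + \<beta>1 \<cdot>\<^sub>m B) * transpose_mat (Q (Suc t) l)"
        using mom_gt[OF l] False unfolding A_def B_def by simp
      also have "\<dots> = (1 - \<beta>1) \<cdot>\<^sub>m (A * transpose_mat (Q (Suc t) l)) + \<beta>1 \<cdot>\<^sub>m (B * transpose_mat (Q (Suc t) l))"
      proof -
        have c: "transpose_mat (Q (Suc t) l) \<in> carrier_mat (r l) (n l)" using P1 by auto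
        have "((1 - \<beta>1) \<cdot>\<^sub>m A + \<beta>1 \<cdot>\<^sub>m B) * transpose_mat (Q (Suc t) l)
            = ((1 - \<beta>1) \<cdot>\<^sub>m A) * transpose_mat (Q (Suc t) l) + (\<beta>1 \<cdot>\<^sub>m B) * transpose_mat (Q (Suc t) l)"
          using A B c by (intro add_mult_distrib_mat[of _ "m l" "r l" _ _ "n l"]) auto
        then show ?thesis using mult_smult_assoc_mat[OF A c] mult_smult_assoc_mat[OF B c] by simp
      qed
      finally have L: "W (Suc t) l = (1 - \<beta>1) \<cdot>\<^sub>m (W t l * Q (Suc t) l * transpose_mat (Q (Suc t) l))
          + \<beta>1 \<cdot>\<^sub>m (G (Suc t) l * Q (Suc t) l * transpose_mat (Q (Suc t) l))"
        unfolding W_def A_def B_def using False by simp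
      have "Pl (Suc t) l ((1 - \<beta>1) \<cdot>\<^sub>m W t l + \<beta>1 \<cdot>\<^sub>m G (Suc t) l)
          = (1 - \<beta>1) \<cdot>\<^sub>m Pl (Suc t) l (W t l) + \<beta>1 \<cdot>\<^sub>m Pl (Suc t) l (G (Suc t) l)"
        using Pl_lin[OF l Wcar[OF l] G1] .
      then show ?thesis unfolding b L using False unfolding Pl_def by simp
    qed
  qed
  have xsuc: "x (Suc t) = x t - \<eta> *\<^sub>R Nv t" for t
  proof (rule vec_eq)
    fix l assume l: "l < NL"
    have "blk l (x (Suc t)) = blk l (x t) - \<eta> \<cdot>\<^sub>m W t l"
      using step_le[OF l] step_gt[OF l] unfolding W_def by (cases "m l \<le> n l") auto
    then show "blk l (x (Suc t)) = blk l (x t - \<eta> *\<^sub>R Nv t)" by (simp add: blk_diff blkN[OF l])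
  qed
  have finf: "(INF y. f y) \<le> f (x t)" for t using A1 by (simp add: cINF_lower)
  interpret G: gal f grad L Pi Nv x \<beta>1 \<eta> \<delta> \<tau> "INF y. f y"
    by unfold_locales (use grad A2 Lpos finf adj idem lin keep svd N0 Nsuc xsuc \<beta>1 \<tau> dpos d1 \<eta> c1 c2 c3 c4 in auto)
  have main: "\<delta> * \<eta> * (\<Sum>t<K * \<tau>. (norm (grad (x t)))\<^sup>2) \<le> 16 * \<Delta>"
    using G.main_bound[OF K] unfolding \<Delta>_def .
  have Tpos: "0 < real (K * \<tau>)" using K \<tau> by simp
  have dep: "0 < \<delta> * \<eta>" using dpos \<eta> by simp
  have "(\<Sum>t<K * \<tau>. (norm (grad (x t)))\<^sup>2) \<le> 16 * \<Delta> / (\<delta> * \<eta>)"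
    using main dep by (simp add: pos_le_divide_eq mult.commute)
  then have "(\<Sum>t<K * \<tau>. (norm (grad (x t)))\<^sup>2) / real (K * \<tau>) \<le> 16 * \<Delta> / (\<delta> * \<eta>) / real (K * \<tau>)"
    using Tpos by (intro divide_right_mono) auto
  then show ?thesis by (simp add: field_simps)
qed

end
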